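(* Let $k\ge1$ and $n\ge1$ be integers such that $\mathcal K=J(k,2n)$ is a hyperbolic knot, let $\rho_0$ be its holonomy representation, conjugated so that $\rho_0(a)=\begin{bmatrix} M&1\\0&M^{-1}\end{bmatrix}$, $\rho_0(b)=\begin{bmatrix} M&0\\2-y&M^{-1}\end{bmatrix}$ for the generators $a,b$ of $G(\mathcal K)=\langle a,b\mid w^na=bw^n\rangle$ (with $w=(ba^{-1})^m(b^{-1}a)^m$ if $k=2m$ and $w=(ba^{-1})^mba(b^{-1}a)^m$ if $k=2m+1$), and let $y=\operatorname{tr}\rho_0(ab^{-1})$, $z=\operatorname{tr}\rho_0(w)$. Then, up to multiplication by $\pm t^i$, the adjoint twisted Alexander polynomial $\Delta^{\mathrm{Ad}\circ\rho_0}_{\mathcal K}(t)$ is a polynomial in $t$ of degree $D$ whose leading coefficient is $c$ and whose constant term is $\pm c$, where: (i) if $k=2m$: $D=3$ and $c=mn\,S_{m-1}(y)^2S_{n-1}(z)^2$; (ii) if $k=2m+1\ge3$: $D=6n-3$ and $c=m\,S_{m-1}(y)^2$; (iii) if $k=1$ and $n\ge2$: $D=6n-9$ and $c=1$.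
   Context: $J(k,l)$ denotes the double twist knot/link, the rational knot/link corresponding to the continued fraction $-k+\frac1l$. The holonomy representation $\rho_0:G(\mathcal K)\to\mathrm{SL}_2(\mathbb C)$ of a hyperbolic knot is a lift of the discrete faithful representation into $\mathrm{PSL}_2(\mathbb C)$ given by the complete hyperbolic structure of the knot exterior. $\mathrm{Ad}:\mathrm{SL}_2(\mathbb C)\to\mathrm{SL}_3(\mathbb C)$ is the adjoint action on $\mathfrak{sl}_2(\mathbb C)$. Wada's twisted Alexander polynomial for $\rho:G\to\mathrm{SL}_d(\mathbb C)$ and a presentation $\langle x_1,\dots,x_l\mid r_1,\dots,r_{l-1}\rangle$ with abelianization $x_i\mapsto t$: with $\Phi(x)=\mathfrak a(x)\rho(x)$ extended to group rings, $\Delta^\rho(t)=\det\big(\Phi(\partial r_i/\partial x_s)\big)_{s\neq j}/\det\Phi(1-x_j)$ (Fox derivatives), defined up to $\pm t^i$; for the presentation above, $\Delta^{\mathrm{Ad}\circ\rho_0}_{\mathcal K}(t)=\det\Phi(\partial r/\partial a)/\det\Phi(1-b)$ with $r=w^naw^{-n}b^{-1}$. $S_l$ are the Chebyshev polynomials of the second kind: $S_0=1$, $S_1=v$, $S_l=vS_{l-1}-S_{l-2}$ for all $l\in\mathbb Z$. *)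

theory Defs
  imports "HOL-Analysis.Analysis" "HOL-Computational_Algebra.Polynomial"
begin

datatype gen = GA | GB

type_synonym letter = "gen \<times> bool"   (* (x, True) = x, (x, False) = x^-1 *)
type_synonym word = "letter list"

definition inv_letter :: "letter \<Rightarrow> letter" where
  "inv_letter l = (fst l, \<not> snd l)"

definition inv_word :: "word \<Rightarrow> word" where
  "inv_word u = rev (map inv_letter u)"

definition la :: letter where "la = (GA, True)"
definition lb :: letter where "lb = (GB, True)"
definition la' :: letter where "la' = (GA, False)"
definition lb' :: letter where "lb' = (GB, False)"

fun wpow :: "word \<Rightarrow> nat \<Rightarrow> word" where
  "wpow u 0 = []"
| "wpow u (Suc j) = u @ wpow u j"

definition w_word :: "nat \<Rightarrow> word" where
  "w_word k = (let m = k div 2 in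
     if even k then wpow [lb, la'] m @ wpow [lb', la] m
     else wpow [lb, la'] m @ [lb, la] @ wpow [lb', la] m)"

text \<open>The relator r = w^n a w^-n b^-1 of G(J(k,2n)) = < a, b | w^n a = b w^n >.\<close>
definition relator :: "nat \<Rightarrow> nat \<Rightarrow> word" where
  "relator k n = wpow (w_word k) n @ [la] @ inv_word (wpow (w_word k) n) @ [lb']"

text \<open>Words representing the identity of G = F(a,b) / <<r>>: the class of the empty word
  under insertion/deletion of cancelling pairs and of r^{\<plusminus>1}.\<close>
inductive gtriv :: "word \<Rightarrow> word \<Rightarrow> bool" for r :: word where
  empty: "gtriv r []"
| ins_pair: "gtriv r (p @ q) \<Longrightarrow> gtriv r (p @ [l, inv_letter l] @ q)"
| del_pair: "gtriv r (p @ [l, inv_letter l] @ q) \<Longrightarrow> gtriv r (p @ q)"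
| ins_rel: "gtriv r (p @ q) \<Longrightarrow> gtriv r (p @ r @ q)"
| del_rel: "gtriv r (p @ r @ q) \<Longrightarrow> gtriv r (p @ q)"
| ins_relinv: "gtriv r (p @ q) \<Longrightarrow> gtriv r (p @ inv_word r @ q)"
| del_relinv: "gtriv r (p @ inv_word r @ q) \<Longrightarrow> gtriv r (p @ q)"

text \<open>Abelianization a, b \<mapsto> t: exponent sum.\<close>
definition expsum :: "word \<Rightarrow> int" where
  "expsum u = sum_list (map (\<lambda>l. if snd l then 1 else -1) u)"

type_synonym mat2 = "complex^2^2"
type_synonym mat3 = "complex^3^3"

definition mk2 :: "complex \<Rightarrow> complex \<Rightarrow> complex \<Rightarrow> complex \<Rightarrow> mat2" where
  "mk2 p q r s = vector [vector [p, q], vector [r, s]]"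

definition rhoA :: "complex \<Rightarrow> mat2" where
  "rhoA M = mk2 M 1 0 (inverse M)"
definition rhoB :: "complex \<Rightarrow> complex \<Rightarrow> mat2" where
  "rhoB M y = mk2 M 0 (2 - y) (inverse M)"

definition rho_letter :: "complex \<Rightarrow> complex \<Rightarrow> letter \<Rightarrow> mat2" where
  "rho_letter M y l = (let g = (if fst l = GA then rhoA M else rhoB M y)
                       in if snd l then g else matrix_inv g)"

definition rho_word :: "complex \<Rightarrow> complex \<Rightarrow> word \<Rightarrow> mat2" where
  "rho_word M y u = foldr (\<lambda>l A. rho_letter M y l ** A) u (mat 1)"

definition discrete_set :: "mat2 set \<Rightarrow> bool" where
  "discrete_set S \<longleftrightarrow> (\<forall>x\<in>S. \<exists>e>0. \<forall>z\<in>S. z \<noteq> x \<longrightarrow> e \<le> dist z x)"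

text \<open>The induced representation of G(K) into PSL_2(C) is discrete and faithful.\<close>
definition discrete_faithful :: "word \<Rightarrow> complex \<Rightarrow> complex \<Rightarrow> bool" where
  "discrete_faithful r M y \<longleftrightarrow>
     rho_word M y r = mat 1 \<and>
     (\<forall>u. (rho_word M y u = mat 1 \<or> rho_word M y u = - mat 1) \<longrightarrow> gtriv r u) \<and>
     discrete_set (range (rho_word M y))"

definition sl2_basis :: "3 \<Rightarrow> mat2" where
  "sl2_basis j = (if j = 1 then mk2 0 1 0 0 else if j = 2 then mk2 1 0 0 (-1) else mk2 0 0 1 0)"

definition sl2_coord :: "3 \<Rightarrow> mat2 \<Rightarrow> complex" where
  "sl2_coord i X = (if i = 1 then X$1$2 else if i = 2 then X$1$1 else X$2$1)"

definition Ad :: "mat2 \<Rightarrow> mat3" where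
  "Ad g = (\<chi> i j. sl2_coord i (g ** sl2_basis j ** matrix_inv g))"

text \<open>Elements of Z[F(a,b)] as formal sums (coefficient, word).\<close>
type_synonym zgroupring = "(int \<times> word) list"

fun fox_letter :: "gen \<Rightarrow> letter \<Rightarrow> zgroupring" where
  "fox_letter x (g, True) = (if g = x then [(1, [])] else [])"
| "fox_letter x (g, False) = (if g = x then [(-1, [(g, False)])] else [])"

fun fox :: "gen \<Rightarrow> word \<Rightarrow> zgroupring" where
  "fox x [] = []"
| "fox x (l # u) = fox_letter x l @ map (\<lambda>(c, v). (c, l # v)) (fox x u)"

definition smult3 :: "complex \<Rightarrow> mat3 \<Rightarrow> mat3" where
  "smult3 c A = (\<chi> i j. c * A$i$j)"

definition Phi :: "complex \<Rightarrow> complex \<Rightarrow> complex \<Rightarrow> zgroupring \<Rightarrow> mat3" where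
  "Phi M y t s = sum_list (map (\<lambda>(c, v). smult3 (of_int c * t powi expsum v)
                                          (Ad (rho_word M y v))) s)"

definition adj_tap :: "nat \<Rightarrow> nat \<Rightarrow> complex \<Rightarrow> complex \<Rightarrow> complex \<Rightarrow> complex" where
  "adj_tap k n M y t = det (Phi M y t (fox GA (relator k n)))
                       / det (Phi M y t [(1, []), (-1, [lb])])"

definition adj_tap_den :: "complex \<Rightarrow> complex \<Rightarrow> complex \<Rightarrow> complex" where
  "adj_tap_den M y t = det (Phi M y t [(1, []), (-1, [lb])])"

text \<open>Chebyshev polynomials of the second kind (needed only for nonnegative index).\<close>
fun cheb_S :: "nat \<Rightarrow> complex \<Rightarrow> complex" where
  "cheb_S 0 v = 1"
| "cheb_S (Suc 0) v = v"
| "cheb_S (Suc (Suc l)) v = v * cheb_S (Suc l) v - cheb_S l v"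

text \<open>Up to multiplication by \<plusminus>t^i, Delta is a polynomial of degree D with leading
  coefficient c and constant term \<plusminus>c (as rational functions: equality for all t
  where the denominator does not vanish).\<close>
definition tap_shape :: "(complex \<Rightarrow> complex) \<Rightarrow> (complex \<Rightarrow> complex) \<Rightarrow> nat \<Rightarrow> complex \<Rightarrow> bool" where
  "tap_shape Delta den D c \<longleftrightarrow>
     (\<exists>p :: complex poly. \<exists>i :: int. \<exists>s :: complex. \<exists>s' :: complex.
        s \<in> {1, -1} \<and> s' \<in> {1, -1} \<and>
        degree p = D \<and> lead_coeff p = c \<and> coeff p 0 = s' * c \<and>
        (\<forall>t. t \<noteq> 0 \<and> den t \<noteq> 0 \<longrightarrow> Delta t = s * t powi i * poly p t))"

end

theory Submission
  imports Defs
begin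

lemma mk2_nth [simp]:
  "mk2 p q r s $ 1 $ 1 = p" "mk2 p q r s $ 1 $ 2 = q"
  "mk2 p q r s $ 2 $ 1 = r" "mk2 p q r s $ 2 $ 2 = s"
  by (simp_all add: mk2_def)

lemma mk2_eta: "g = mk2 (g$1$1) (g$1$2) (g$2$1) (g$2$2)"
  by (simp add: vec_eq_iff forall_2)

lemma mk2_eq_iff: "mk2 p q r s = mk2 p' q' r' s' \<longleftrightarrow> p = p' \<and> q = q' \<and> r = r' \<and> s = s'"
  by (auto simp: vec_eq_iff forall_2)

lemma mk2_mult: "mk2 a b c d ** mk2 e f g h = mk2 (a*e+b*g) (a*f+b*h) (c*e+d*g) (c*f+d*h)"
  by (simp add: matrix_matrix_mult_def vec_eq_iff forall_2 sum_2)

lemma mat1_mk2: "(mat 1 :: mat2) = mk2 1 0 0 1"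
  by (simp add: vec_eq_iff forall_2 mat_def)

lemma matrix_inv_eqI:
  fixes A B :: "'a::semiring_1^'n^'n"
  assumes "A ** B = mat 1" "B ** A = mat 1"
  shows "matrix_inv A = B"
proof -
  have ex: "\<exists>A'. A ** A' = mat 1 \<and> A' ** A = mat 1" using assms by blast
  define C where "C = matrix_inv A"
  have C: "A ** C = mat 1 \<and> C ** A = mat 1"
    unfolding C_def matrix_inv_def by (rule someI_ex[OF ex])
  have "C = C ** (A ** B)" using assms by simp
  also have "\<dots> = (C ** A) ** B" by (simp add: matrix_mul_assoc)
  also have "\<dots> = B" using C by simp
  finally show ?thesis unfolding C_def .
qed

lemma det_mk2: "det (mk2 p q r s) = p * s - q * r"
  by (simp add: det_2)

lemma inv_mk2: "p * s - q * r = 1 \<Longrightarrow> matrix_inv (mk2 p q r s) = mk2 s (-q) (-r) (p::complex)"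
  by (rule matrix_inv_eqI) (simp_all add: mk2_mult mat1_mk2 algebra_simps)


lemma invM: "M * M = 1 \<Longrightarrow> inverse M = (M::complex)"
  by (metis inverse_unique)

lemma rho_letter_simps:
  assumes "M * M = 1"
  shows "rho_letter M y (GA, True) = mk2 M 1 0 M"
    "rho_letter M y (GA, False) = mk2 M (-1) 0 M"
    "rho_letter M y (GB, True) = mk2 M 0 (2 - y) M"
    "rho_letter M y (GB, False) = mk2 M 0 (y - 2) M"
  using assms by (simp_all add: rho_letter_def rhoA_def rhoB_def invM inv_mk2)

lemma rho_letter_det: "M * M = 1 \<Longrightarrow> det (rho_letter M y l) = 1"
  by (cases l; cases "fst l"; cases "snd l") (auto simp: rho_letter_simps det_mk2)

lemma rho_word_Nil [simp]: "rho_word M y [] = mat 1"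
  by (simp add: rho_word_def)

lemma rho_word_Cons: "rho_word M y (l # u) = rho_letter M y l ** rho_word M y u"
  by (simp add: rho_word_def)

lemma rho_word_append: "rho_word M y (u @ v) = rho_word M y u ** rho_word M y v"
  by (induction u) (simp_all add: rho_word_Cons matrix_mul_assoc)

lemma rho_word_single: "rho_word M y [l] = rho_letter M y l"
  by (simp add: rho_word_Cons)

lemma rho_word_det: "M * M = 1 \<Longrightarrow> det (rho_word M y u) = 1"
  by (induction u) (simp_all add: rho_word_Cons det_mul rho_letter_det)

lemma rho_letter_inv:
  assumes "M * M = 1"
  shows "rho_letter M y (inv_letter l) ** rho_letter M y l = mat 1"
    "rho_letter M y l ** rho_letter M y (inv_letter l) = mat 1"
  using assms
  by (cases l; cases "fst l"; cases "snd l";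
      auto simp: rho_letter_simps inv_letter_def mk2_mult mat1_mk2 algebra_simps)+

lemma inv_word_Nil [simp]: "inv_word [] = []" by (simp add: inv_word_def)
lemma inv_word_Cons: "inv_word (l # u) = inv_word u @ [inv_letter l]"
  by (simp add: inv_word_def)
lemma inv_word_append: "inv_word (u @ v) = inv_word v @ inv_word u"
  by (simp add: inv_word_def)
lemma inv_letter_inv [simp]: "inv_letter (inv_letter l) = l"
  by (simp add: inv_letter_def)
lemma inv_word_inv [simp]: "inv_word (inv_word u) = u"
  by (simp add: inv_word_def rev_map comp_def)

lemma rho_word_inv:
  assumes "M * M = 1"
  shows "rho_word M y (inv_word u) ** rho_word M y u = mat 1"
    "rho_word M y u ** rho_word M y (inv_word u) = mat 1"
proof -
  show A: "rho_word M y (inv_word u) ** rho_word M y u = mat 1" for u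
  proof (induction u)
    case Nil then show ?case by simp
  next
    case (Cons l u)
    have "rho_word M y (inv_word (l # u)) ** rho_word M y (l # u)
        = rho_word M y (inv_word u) ** ((rho_letter M y (inv_letter l) ** rho_letter M y l) ** rho_word M y u)"
      by (simp add: inv_word_Cons rho_word_append rho_word_Cons rho_word_single matrix_mul_assoc)
    also have "\<dots> = mat 1" using Cons rho_letter_inv[OF assms] by simp
    finally show ?case .
  qed
  show "rho_word M y u ** rho_word M y (inv_word u) = mat 1"
    using A[of "inv_word u"] by simp
qed

lemma rho_word_inv_matrix_inv:
  "M * M = 1 \<Longrightarrow> matrix_inv (rho_word M y u) = rho_word M y (inv_word u)"
  by (rule matrix_inv_eqI) (simp_all add: rho_word_inv)

definition adf :: "mat2 \<Rightarrow> mat3" where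
  "adf g = (let p = g$1$1; q = g$1$2; r = g$2$1; s = g$2$2 in
     vector [vector [p^2, -2 * p * q, -(q^2)], vector [-(p * r), p * s + q * r, q * s],
             vector [-(r^2), 2 * r * s, s^2]])"

lemma three_neq [simp]: "(2::3) \<noteq> 1" "(3::3) \<noteq> 1" "(3::3) \<noteq> 2" "(1::3) \<noteq> 2" "(1::3) \<noteq> 3" "(2::3) \<noteq> 3"
  by simp_all

lemma Ad_formula:
  assumes "det g = 1"
  shows "Ad g = adf g"
proof -
  obtain p q r s where g: "g = mk2 p q r s" using mk2_eta by blast
  have d: "p * s - q * r = 1" using assms by (simp add: g det_mk2)
  show ?thesis
    unfolding g Ad_def adf_def Let_def inv_mk2[OF d]
    by (simp add: vec_eq_iff forall_3 sl2_coord_def sl2_basis_def mk2_mult power2_eq_square algebra_simps)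
qed

lemma adf_mult: "adf g ** adf h = adf (g ** h)"
  by (simp add: adf_def Let_def matrix_matrix_mult_def vec_eq_iff forall_3 sum_3 sum_2
      power2_eq_square algebra_simps)

lemma adf_det: "det (adf g) = (det g)^3"
  by (simp add: adf_def Let_def det_3 det_2 power3_eq_cube power2_eq_square algebra_simps)

lemma Ad_mult: "det g = 1 \<Longrightarrow> det h = 1 \<Longrightarrow> Ad g ** Ad h = Ad (g ** h)"
  by (simp add: Ad_formula adf_mult det_mul)

lemma Ad_det: "det g = 1 \<Longrightarrow> det (Ad g) = 1"
  by (simp add: Ad_formula adf_det)

lemma Ad_one: "Ad (mat 1) = mat 1"
  by (simp add: Ad_formula adf_def vec_eq_iff forall_3 mat1_mk2 det_mk2, simp add: mat_def)

lemma smult3_mult_left: "smult3 c A ** B = smult3 c (A ** B)"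
  by (simp add: smult3_def matrix_matrix_mult_def vec_eq_iff sum_distrib_left mult.assoc)

lemma smult3_mult_right: "A ** smult3 c B = smult3 c (A ** B)"
  by (simp add: smult3_def matrix_matrix_mult_def vec_eq_iff sum_distrib_left mult_ac)

lemma smult3_smult3: "smult3 c (smult3 d A) = smult3 (c * d) A"
  by (simp add: smult3_def vec_eq_iff mult.assoc)

lemma smult3_add_right: "smult3 c (A + B) = smult3 c A + smult3 c B"
  by (simp add: smult3_def vec_eq_iff algebra_simps)

lemma smult3_add_left: "smult3 (c + d) A = smult3 c A + smult3 d A"
  by (simp add: smult3_def vec_eq_iff algebra_simps)

lemma smult3_diff_right: "smult3 c (A - B) = smult3 c A - smult3 c B"
  by (simp add: smult3_def vec_eq_iff algebra_simps)

lemma smult3_minus_left: "smult3 (- c) A = - smult3 c A"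
  by (simp add: smult3_def vec_eq_iff)

lemma smult3_minus_right: "smult3 c (- A) = - smult3 c A"
  by (simp add: smult3_def vec_eq_iff)

lemma smult3_one [simp]: "smult3 1 A = A"
  by (simp add: smult3_def vec_eq_iff)

lemma smult3_zero [simp]: "smult3 0 A = 0" "smult3 c 0 = 0"
  by (simp_all add: smult3_def vec_eq_iff)

lemma smult3_mat: "smult3 c A = mat c ** A"
  by (simp add: smult3_def matrix_matrix_mult_def mat_def vec_eq_iff if_distrib if_distribR
      sum.delta cong: if_cong)

lemma smult3_nth [simp]: "smult3 c A $ i $ j = c * A $ i $ j"
  by (simp add: smult3_def)

lemma matrix_neg_left: "(- A) ** B = - (A ** (B::'a::ring_1^'n^'n))"
  by (simp add: matrix_matrix_mult_def vec_eq_iff sum_negf)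

lemma matrix_neg_right: "A ** (- B) = - (A ** (B::'a::ring_1^'n^'n))"
  by (simp add: matrix_matrix_mult_def vec_eq_iff sum_negf)

lemma matrix_add_rdistrib: "(A + B) ** C = A ** C + B ** (C::'a::ring_1^'n^'n)"
  by (simp add: matrix_matrix_mult_def vec_eq_iff sum.distrib algebra_simps)

lemma matrix_diff_ldistrib: "A ** (B - C) = A ** B - A ** (C::'a::ring_1^'n^'n)"
  by (simp add: matrix_matrix_mult_def vec_eq_iff sum_subtractf algebra_simps)

lemma matrix_diff_rdistrib: "(A - B) ** C = A ** C - B ** (C::'a::ring_1^'n^'n)"
  by (simp add: matrix_matrix_mult_def vec_eq_iff sum_subtractf algebra_simps)

lemma expsum_Nil [simp]: "expsum [] = 0" by (simp add: expsum_def)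
lemma expsum_Cons: "expsum (l # u) = (if snd l then 1 else -1) + expsum u"
  by (simp add: expsum_def)
lemma expsum_append: "expsum (u @ v) = expsum u + expsum v"
  by (simp add: expsum_def)
lemma expsum_inv_word: "expsum (inv_word u) = - expsum u"
  by (induction u) (auto simp: inv_word_Cons expsum_append expsum_Cons inv_letter_def)

definition Phi1 :: "complex \<Rightarrow> complex \<Rightarrow> complex \<Rightarrow> word \<Rightarrow> mat3" where
  "Phi1 M y t u = smult3 (t powi expsum u) (Ad (rho_word M y u))"

lemma Phi_Nil [simp]: "Phi M y t [] = 0" by (simp add: Phi_def)
lemma Phi_Cons: "Phi M y t ((c, v) # s) = smult3 (of_int c) (Phi1 M y t v) + Phi M y t s"
  by (simp add: Phi_def Phi1_def smult3_smult3)
lemma Phi_append: "Phi M y t (s1 @ s2) = Phi M y t s1 + Phi M y t s2"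
  by (simp add: Phi_def)
lemma Phi_single: "Phi M y t [(c, v)] = smult3 (of_int c) (Phi1 M y t v)"
  by (simp add: Phi_Cons)

lemma Phi1_Nil [simp]: "Phi1 M y t [] = mat 1"
  by (simp add: Phi1_def Ad_one)

lemma Phi1_append:
  assumes "M * M = 1" "t \<noteq> 0"
  shows "Phi1 M y t (u @ v) = Phi1 M y t u ** Phi1 M y t v"
  using assms
  by (simp add: Phi1_def expsum_append power_int_add rho_word_append Ad_mult rho_word_det
      smult3_mult_left smult3_mult_right smult3_smult3 mult.commute)

lemma Phi1_inv:
  assumes "M * M = 1" "t \<noteq> 0"
  shows "Phi1 M y t (inv_word u) ** Phi1 M y t u = mat 1"
    "Phi1 M y t u ** Phi1 M y t (inv_word u) = mat 1"
proof -
  have "Phi1 M y t (inv_word u @ u) = mat 1" "Phi1 M y t (u @ inv_word u) = mat 1"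
    using assms by (simp_all add: Phi1_def expsum_append expsum_inv_word rho_word_append rho_word_inv Ad_one)
  then show "Phi1 M y t (inv_word u) ** Phi1 M y t u = mat 1"
    "Phi1 M y t u ** Phi1 M y t (inv_word u) = mat 1"
    by (simp_all add: Phi1_append[OF assms])
qed

lemma Phi_prefix:
  assumes "M * M = 1" "t \<noteq> 0"
  shows "Phi M y t (map (\<lambda>(c, v). (c, u @ v)) s) = Phi1 M y t u ** Phi M y t s"
proof (induction s)
  case Nil then show ?case by simp
next
  case (Cons a s)
  obtain c v where a: "a = (c, v)" by fastforce
  show ?case using Cons
    by (simp add: a Phi_Cons Phi1_append[OF assms] matrix_add_ldistrib smult3_mult_right)
qed

lemma fox_append: "fox x (u @ v) = fox x u @ map (\<lambda>(c, w). (c, u @ w)) (fox x v)"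
proof (induction u)
  case Nil
  have "map (\<lambda>(c, w). (c, w)) s = s" for s :: zgroupring by (induction s) auto
  then show ?case by simp
next
  case (Cons l u)
  have "map (\<lambda>(c, v). (c, l # v)) (map (\<lambda>(c, w). (c, u @ w)) s) = map (\<lambda>(c, w). (c, (l # u) @ w)) s"
    for s :: zgroupring by (induction s) auto
  then show ?case using Cons by simp
qed

lemma Phi_fox_append:
  assumes "M * M = 1" "t \<noteq> 0"
  shows "Phi M y t (fox x (u @ v)) = Phi M y t (fox x u) + Phi1 M y t u ** Phi M y t (fox x v)"
  by (simp add: fox_append Phi_append Phi_prefix[OF assms])

lemma fox_Cons': "fox x (l # u) = fox_letter x l @ map (\<lambda>(c, w). (c, [l] @ w)) (fox x u)"
  by simp

lemma Phi_fox_Cons: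
  assumes "M * M = 1" "t \<noteq> 0"
  shows "Phi M y t (fox x (l # u)) = Phi M y t (fox_letter x l) + Phi1 M y t [l] ** Phi M y t (fox x u)"
  by (simp only: fox_Cons' Phi_append Phi_prefix[OF assms])

lemma Phi_fox_letter:
  "Phi M y t (fox_letter x (g, True)) = (if g = x then mat 1 else 0)"
  "Phi M y t (fox_letter x (g, False)) = (if g = x then - Phi1 M y t [(g, False)] else 0)"
  by (simp_all add: Phi_single smult3_minus_left)

lemma Phi_fox_single:
  assumes "M * M = 1" "t \<noteq> 0"
  shows "Phi M y t (fox x [l]) = Phi M y t (fox_letter x l)"
  using Phi_fox_Cons[OF assms, where x = x and l = l and u = "[]"] by simp

lemma Phi_fox_inv_letter:
  assumes "M * M = 1" "t \<noteq> 0"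
  shows "Phi M y t (fox x [inv_letter l]) = - Phi1 M y t [inv_letter l] ** Phi M y t (fox x [l])"
proof -
  obtain g b where l: "l = (g, b)" by fastforce
  show ?thesis
  proof (cases b)
    case True
    then show ?thesis
      by (simp add: l Phi_fox_single[OF assms] inv_letter_def Phi_fox_letter matrix_neg_left
          Phi_single smult3_minus_left)
  next
    case False
    have "Phi1 M y t [(g, True)] ** Phi1 M y t [(g, False)] = mat 1"
      using Phi1_inv(1)[OF assms, where u = "[(g, False)]"] by (simp add: inv_word_def inv_letter_def)
    then show ?thesis using False
      by (simp add: l Phi_fox_single[OF assms] inv_letter_def Phi_fox_letter matrix_neg_left matrix_neg_right
          Phi_single smult3_minus_left; metis)
  qed
qed

lemma Phi_fox_inv_word:
  assumes "M * M = 1" "t \<noteq> 0"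
  shows "Phi M y t (fox x (inv_word u)) = - Phi1 M y t (inv_word u) ** Phi M y t (fox x u)"
proof (induction u)
  case Nil then show ?case by (simp add: inv_word_def)
next
  case (Cons l u)
  have "Phi M y t (fox x (inv_word (l # u)))
      = Phi M y t (fox x (inv_word u)) + Phi1 M y t (inv_word u) ** Phi M y t (fox x [inv_letter l])"
    by (simp add: inv_word_Cons Phi_fox_append[OF assms])
  also have "\<dots> = - Phi1 M y t (inv_word u) ** Phi M y t (fox x u)
      - Phi1 M y t (inv_word u) ** (Phi1 M y t [inv_letter l] ** Phi M y t (fox x [l]))"
    by (simp only: Cons Phi_fox_inv_letter[OF assms] matrix_neg_left matrix_neg_right
        matrix_mul_assoc diff_conv_add_uminus)
  also have "\<dots> = - Phi1 M y t (inv_word (l # u)) ** Phi M y t (fox x (l # u))"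
  proof -
    let ?A = "Phi1 M y t (inv_word u)" and ?B = "Phi1 M y t [inv_letter l]"
      and ?C = "Phi M y t (fox x [l])" and ?D = "Phi1 M y t [l]" and ?E = "Phi M y t (fox x u)"
    have BD: "?B ** ?D = mat 1"
      using Phi1_inv(1)[OF assms, where u = "[l]"] by (simp add: inv_word_def)
    have e1: "Phi1 M y t (inv_word (l # u)) = ?A ** ?B"
      by (simp add: inv_word_Cons Phi1_append[OF assms])
    have e2: "Phi M y t (fox x (l # u)) = ?C + ?D ** ?E"
      using Phi_fox_append[OF assms, where u = "[l]" and v = u] by simp
    have "(?A ** ?B) ** (?C + ?D ** ?E) = ?A ** (?B ** ?C) + ?A ** ((?B ** ?D) ** ?E)"
      by (simp add: matrix_add_ldistrib matrix_mul_assoc)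
    also have "\<dots> = ?A ** (?B ** ?C) + ?A ** ?E" by (simp add: BD)
    finally have "(?A ** ?B) ** (?C + ?D ** ?E) = ?A ** (?B ** ?C) + ?A ** ?E" .
    then show ?thesis unfolding e1 e2 by (simp add: matrix_neg_left)
  qed
  finally show ?case .
qed

lemma fundamental:
  assumes "M * M = 1" "t \<noteq> 0"
  shows "Phi M y t (fox GA u) ** (Phi1 M y t [la] - mat 1) + Phi M y t (fox GB u) ** (Phi1 M y t [lb] - mat 1)
     = Phi1 M y t u - mat 1"
proof (induction u)
  case Nil then show ?case by simp
next
  case (Cons l u)
  obtain g b where l: "l = (g, b)" by fastforce
  have IH: "Phi1 M y t [l] ** (Phi M y t (fox GA u) ** (Phi1 M y t [la] - mat 1) + Phi M y t (fox GB u) ** (Phi1 M y t [lb] - mat 1))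
     = Phi1 M y t [l] ** Phi1 M y t u - Phi1 M y t [l]"
    using Cons by (simp add: matrix_diff_ldistrib)
  have inv1: "Phi1 M y t [(g, False)] ** Phi1 M y t [(g, True)] = mat 1"
    using Phi1_inv(1)[OF assms, where u = "[(g, True)]"] by (simp add: inv_word_def inv_letter_def)
  have one: "Phi1 M y t (l # u) = Phi1 M y t [l] ** Phi1 M y t u"
    using Phi1_append[OF assms, where u = "[l]" and v = u] by simp
  have "Phi M y t (fox GA (l # u)) ** (Phi1 M y t [la] - mat 1) + Phi M y t (fox GB (l # u)) ** (Phi1 M y t [lb] - mat 1)
     = (Phi M y t (fox_letter GA l) ** (Phi1 M y t [la] - mat 1) + Phi M y t (fox_letter GB l) ** (Phi1 M y t [lb] - mat 1))
       + Phi1 M y t [l] ** (Phi M y t (fox GA u) ** (Phi1 M y t [la] - mat 1) + Phi M y t (fox GB u) ** (Phi1 M y t [lb] - mat 1))"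
    by (simp only: Phi_fox_Cons[OF assms] matrix_add_rdistrib matrix_add_ldistrib matrix_mul_assoc add_ac)
  also have "Phi M y t (fox_letter GA l) ** (Phi1 M y t [la] - mat 1) + Phi M y t (fox_letter GB l) ** (Phi1 M y t [lb] - mat 1)
      = Phi1 M y t [l] - mat 1"
  proof (cases b)
    case True
    then show ?thesis by (cases g) (simp_all add: l Phi_fox_letter la_def lb_def Phi_single)
  next
    case False
    have inv1: "Phi1 M y t [(g, False)] ** Phi1 M y t [(g, True)] = mat 1"
      using Phi1_inv(1)[OF assms, where u = "[(g, True)]"] by (simp add: inv_word_def inv_letter_def)
    show ?thesis using False inv1
      by (cases g) (simp_all add: l Phi_fox_letter la_def lb_def matrix_neg_left matrix_diff_ldistrib Phi_single
          smult3_minus_left)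
  qed
  finally show ?case using IH one by simp
qed

fun chU :: "nat \<Rightarrow> complex \<Rightarrow> complex" where
  "chU 0 v = 0"
| "chU (Suc 0) v = 1"
| "chU (Suc (Suc n)) v = v * chU (Suc n) v - chU n v"

lemma cheb_S_chU: "cheb_S n v = chU (Suc n) v"
  by (induction n v rule: cheb_S.induct) simp_all

fun mpow :: "'a::semiring_1^'n^'n \<Rightarrow> nat \<Rightarrow> 'a^'n^'n" where
  "mpow A 0 = mat 1"
| "mpow A (Suc n) = A ** mpow A n"

lemma mpow_add: "mpow A (m + n) = mpow A m ** mpow A n"
  by (induction m) (simp_all add: matrix_mul_assoc)

lemma mpow_Suc': "mpow A (Suc n) = mpow A n ** A"
  using mpow_add[of A n 1] by simp

lemma det_mpow: "det (mpow (A::'a::comm_ring_1^'n^'n) n) = det A ^ n"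
  by (induction n) (simp_all add: det_mul)

lemma pf_aux:
  fixes p q r s a b :: complex
  assumes "p * s - q * r = 1"
  shows "p * (a * p - b) + q * (a * r) = ((p + s) * a - b) * p - a"
    "p * (a * q) + q * (a * s - b) = ((p + s) * a - b) * q"
    "r * (a * p - b) + s * (a * r) = ((p + s) * a - b) * r"
    "r * (a * q) + s * (a * s - b) = ((p + s) * a - b) * s - a"
  using assms by algebra+

lemma power_formula:
  fixes p q r s :: complex
  assumes "p * s - q * r = 1"
  shows "mpow (mk2 p q r s) (Suc n) =
    mk2 (chU (Suc n) (p + s) * p - chU n (p + s)) (chU (Suc n) (p + s) * q)
        (chU (Suc n) (p + s) * r) (chU (Suc n) (p + s) * s - chU n (p + s))"
proof (induction n)
  case 0 then show ?case by (simp add: mat1_mk2 mk2_mult)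
next
  case (Suc n)
  show ?case
    apply (subst mpow.simps(2))
    apply (subst Suc)
    apply (simp only: mk2_mult mk2_eq_iff chU.simps pf_aux[OF assms])
    done
qed

lemma mpow_scalar:
  fixes g :: mat2
  assumes "det g = 1" "n \<ge> 1" "chU n (trace g) = 0"
  shows "\<exists>lam. mpow g n = mk2 lam 0 0 lam \<and> lam * lam = 1"
proof -
  obtain p q r s where g: "g = mk2 p q r s" using mk2_eta by blast
  have d: "p * s - q * r = 1" using assms by (simp add: g det_mk2)
  have tr: "trace (mk2 p q r s) = p + s" by (simp add: trace_def sum_2)
  obtain m where n: "n = Suc m" using assms by (cases n) auto
  have "mpow g n = mk2 (- chU m (p + s)) 0 0 (- chU m (p + s))"
    using power_formula[OF d, of m] assms(3) by (simp add: g n tr)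
  moreover have "det (mpow g n) = 1" by (simp add: det_mpow assms)
  ultimately show ?thesis by (auto simp: det_mk2)
qed

lemma matrix_sum_left: "(A::'a::ring_1^'n^'n) ** (\<Sum>(j::nat)<n. B j) = (\<Sum>j<n. A ** B j :: 'a::ring_1^'n^'n)"
  by (induction n) (simp_all add: matrix_add_ldistrib)

lemma matrix_sum_right: "(\<Sum>(j::nat)<n. B j) ** (A::'a::ring_1^'n^'n) = (\<Sum>j<n. B j ** A :: 'a::ring_1^'n^'n)"
  by (induction n) (simp_all add: matrix_add_rdistrib)

lemma Ad_mpow: "det g = 1 \<Longrightarrow> mpow (Ad g) j = Ad (mpow g j)"
  by (induction j) (simp_all add: Ad_one Ad_mult det_mpow)

section \<open>The determinant of a geometric sum of Ad\<close>

fun chV :: "complex \<Rightarrow> complex \<Rightarrow> nat \<Rightarrow> complex" where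
  "chV a b 0 = 0"
| "chV a b (Suc n) = a ^ n + b * chV a b n"

lemma chV_chU:
  assumes "a * b = 1"
  shows "chV a b n = chU n (a + b)"
proof -
  have "chV a b n = chU n (a + b) \<and> chV a b (Suc n) = chU (Suc n) (a + b)"
  proof (induction n)
    case 0 then show ?case by simp
  next
    case (Suc n)
    have "chV a b (Suc (Suc n)) = (a + b) * chV a b (Suc n) - chV a b n"
    proof -
      have "a ^ Suc n = a * a ^ n + (a * b - 1) * chV a b n" using assms by simp
      then show ?thesis by (simp add: algebra_simps)
    qed
    then have "chV a b (Suc (Suc n)) = chU (Suc (Suc n)) (a + b)"
      using Suc by (simp only: chU.simps)
    then show ?case using Suc by blast
  qed
  then show ?thesis by simp
qed

lemma chV_geom:
  assumes "a * b = 1"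
  shows "chV a b n * a ^ (n - 1) = (\<Sum>j<n. a ^ (2 * j))"
proof (induction n)
  case 0 then show ?case by simp
next
  case (Suc n)
  show ?case
  proof (cases n)
    case 0 then show ?thesis by simp
  next
    case (Suc m)
    have e1: "a ^ n = a * a ^ m" "n - 1 = m" "a ^ (2 * n) = a ^ n * a ^ n" using Suc
      by (simp_all add: mult_2 power_add)
    have "chV a b (Suc n) * a ^ n = a ^ (2 * n) + (a * b) * (chV a b n * a ^ (n - 1))"
      unfolding e1 chV.simps by (simp add: algebra_simps)
    then show ?thesis using Suc.IH assms by simp
  qed
qed

lemma geom_prod:
  assumes "a * b = 1"
  shows "(\<Sum>j<n. a ^ (2 * j)) * (\<Sum>j<n. b ^ (2 * j)) = (chU n (a + b))^2"
proof -
  have ba: "b * a = 1" using assms by (simp add: mult.commute)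
  have "(\<Sum>j<n. a ^ (2 * j)) * (\<Sum>j<n. b ^ (2 * j)) = (chV a b n * a ^ (n - 1)) * (chV b a n * b ^ (n - 1))"
    using chV_geom[OF assms] chV_geom[OF ba] by simp
  also have "\<dots> = chV a b n * chV b a n * (a * b) ^ (n - 1)" by (simp add: power_mult_distrib algebra_simps)
  also have "\<dots> = (chU n (a + b))^2" using chV_chU[OF assms] chV_chU[OF ba]
    by (simp add: assms power2_eq_square add.commute)
  finally show ?thesis .
qed


lemma conj_mpow:
  assumes "hinv ** h = mat 1" "h ** hinv = (mat 1 :: 'a::ring_1^'n^'n)"
  shows "h ** mpow g j ** hinv = mpow (h ** g ** hinv) j"
proof (induction j)
  case 0 then show ?case using assms by simp
next
  case (Suc j)
  have "h ** mpow g (Suc j) ** hinv = (h ** g ** hinv) ** (h ** mpow g j ** hinv)"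
  proof -
    have "(h ** g ** hinv) ** (h ** mpow g j ** hinv) = h ** g ** (hinv ** h) ** mpow g j ** hinv"
      by (simp add: matrix_mul_assoc)
    then show ?thesis using assms by (simp add: matrix_mul_assoc)
  qed
  then show ?case using Suc by simp
qed

lemma upper_pow:
  "\<exists>x'. mpow (mk2 a x 0 d) j = mk2 (a ^ j) x' 0 (d ^ j)"
proof (induction j)
  case 0 then show ?case by (auto simp: mat1_mk2)
next
  case (Suc j)
  then obtain x' where "mpow (mk2 a x 0 d) j = mk2 (a ^ j) x' 0 (d ^ j)" by blast
  then show ?case by (simp add: mk2_mult) blast
qed

lemma adf_upper: "adf (mk2 a b 0 d) = vector [vector [a^2, -2 * a * b, -(b^2)], vector [0, a * d, b * d],
             vector [0, 0, d^2]]"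
  by (simp add: adf_def)

lemma triangularize:
  fixes g :: mat2
  assumes "det g = 1"
  shows "\<exists>mu mu' x h hinv. mu * mu' = 1 \<and> mu + mu' = trace g \<and> h ** hinv = mat 1 \<and> hinv ** h = mat 1
     \<and> det h = 1 \<and> det hinv = 1 \<and> h ** g ** hinv = mk2 mu x 0 mu'"
proof -
  obtain p q r s where g: "g = mk2 p q r s" using mk2_eta by blast
  have d: "p * s - q * r = 1" using assms by (simp add: g det_mk2)
  have tr: "trace g = p + s" by (simp add: g trace_def sum_2)
  show ?thesis
  proof (cases "q = 0")
    case True
    let ?h = "mk2 0 1 (-1) 0" and ?hi = "mk2 0 (-1) 1 0"
    have "s * p = 1 \<and> s + p = trace g \<and> ?h ** ?hi = mat 1 \<and> ?hi ** ?h = mat 1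
     \<and> det ?h = 1 \<and> det ?hi = 1 \<and> ?h ** g ** ?hi = mk2 s (-r) 0 p"
      using d True by (simp add: g tr mk2_mult mat1_mk2 det_mk2 algebra_simps trace_def sum_2)
    then show ?thesis by blast
  next
    case False
    define tau where "tau = p + s"
    define mu where "mu = (tau + csqrt (tau^2 - 4)) / 2"
    have musq: "mu^2 - tau * mu + 1 = 0"
    proof -
      have "(csqrt (tau^2 - 4))^2 = tau^2 - 4" by simp
      then show ?thesis unfolding mu_def by (simp add: power2_eq_square field_simps) algebra
    qed
    let ?h = "mk2 (1/q) 0 (p - mu) q" and ?hi = "mk2 q 0 (mu - p) (1/q)"
    have "mu * (tau - mu) = 1" using musq by (simp add: power2_eq_square algebra_simps)
    moreover have "mu + (tau - mu) = trace g" by (simp add: tr tau_def)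
    moreover have "?h ** ?hi = mat 1 \<and> ?hi ** ?h = mat 1 \<and> det ?h = 1 \<and> det ?hi = 1"
      using False by (simp add: mk2_mult mat1_mk2 det_mk2 algebra_simps add_divide_distrib[symmetric])
    moreover have "?h ** g ** ?hi = mk2 mu (1/q) 0 (tau - mu)"
    proof -
      have e: "r * q + s * (mu - p) = mu * (mu - p)"
        using d musq unfolding tau_def by (simp add: power2_eq_square) algebra
      show ?thesis using False e
        by (simp add: g mk2_mult mk2_eq_iff tau_def field_simps) algebra
    qed
    ultimately show ?thesis by blast
  qed
qed

lemma det_geom_Ad:
  fixes g :: mat2
  assumes "det g = 1"
  shows "det (\<Sum>j<n. mpow (Ad g) j) = of_nat n * (chU n (trace g))^2"
proof -
  obtain mu mu' x h hinv where mm: "mu * mu' = 1" "mu + mu' = trace g" and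
    hh: "h ** hinv = mat 1" "hinv ** h = mat 1" "det h = 1" "det hinv = 1"
    and T: "h ** g ** hinv = mk2 mu x 0 mu'"
    using triangularize[OF assms] by blast
  let ?T = "mk2 mu x 0 mu'"
  have dT: "det ?T = 1" using mm by (simp add: det_mk2)
  have "Ad h ** (\<Sum>j<n. mpow (Ad g) j) ** Ad hinv = (\<Sum>j<n. Ad h ** mpow (Ad g) j ** Ad hinv)"
    by (simp add: matrix_sum_left matrix_sum_right)
  also have "\<dots> = (\<Sum>j<n. Ad (mpow ?T j))"
  proof (rule sum.cong[OF refl])
    fix j
    have "Ad h ** mpow (Ad g) j ** Ad hinv = Ad (h ** mpow g j ** hinv)"
      using assms hh by (simp add: Ad_mpow Ad_mult det_mpow det_mul)
    also have "\<dots> = Ad (mpow ?T j)" using conj_mpow[OF hh(2) hh(1)] T by simp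
    finally show "Ad h ** mpow (Ad g) j ** Ad hinv = Ad (mpow ?T j)" .
  qed
  finally have conj: "Ad h ** (\<Sum>j<n. mpow (Ad g) j) ** Ad hinv = (\<Sum>j<n. Ad (mpow ?T j))" .
  have "det (\<Sum>j<n. mpow (Ad g) j) = det (\<Sum>j<n. Ad (mpow ?T j))"
    using conj[symmetric] hh by (simp add: det_mul Ad_det)
  also have "\<dots> = (\<Sum>j<n. mu ^ (2 * j)) * of_nat n * (\<Sum>j<n. mu' ^ (2 * j))"
  proof -
    have "\<forall>j. \<exists>x'. Ad (mpow ?T j) = vector [vector [(mu ^ j)^2, -2 * mu ^ j * x', -(x'^2)],
        vector [0, mu ^ j * mu' ^ j, x' * mu' ^ j], vector [0, 0, (mu' ^ j)^2]]"
    proof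
      fix j
      obtain x' where "mpow ?T j = mk2 (mu ^ j) x' 0 (mu' ^ j)" using upper_pow by blast
      moreover have "det (mpow ?T j) = 1" using dT by (simp add: det_mpow)
      ultimately show "\<exists>x'. Ad (mpow ?T j) = vector [vector [(mu ^ j)^2, -2 * mu ^ j * x', -(x'^2)],
        vector [0, mu ^ j * mu' ^ j, x' * mu' ^ j], vector [0, 0, (mu' ^ j)^2]]"
        by (simp add: Ad_formula adf_upper) blast
    qed
    then obtain X where X: "\<And>j. Ad (mpow ?T j) = vector [vector [(mu ^ j)^2, -2 * mu ^ j * X j, -((X j)^2)],
        vector [0, mu ^ j * mu' ^ j, X j * mu' ^ j], vector [0, 0, (mu' ^ j)^2]]"
      by metis
    have pw: "(mu ^ j)^2 = mu ^ (2 * j)" "(mu' ^ j)^2 = mu' ^ (2 * j)" "mu ^ j * mu' ^ j = 1" for j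
      by (metis power_mult mult.commute, metis power_mult mult.commute,
          simp add: power_mult_distrib[symmetric] mm)
    show ?thesis by (simp add: det_3 X pw)
  qed
  also have "\<dots> = of_nat n * (chU n (trace g))^2"
    using geom_prod[OF mm(1)] mm(2) by (simp add: algebra_simps)
  finally show ?thesis .
qed

definition d3 :: "complex \<Rightarrow> complex \<Rightarrow> complex \<Rightarrow> complex \<Rightarrow> complex \<Rightarrow> complex \<Rightarrow>
   complex \<Rightarrow> complex \<Rightarrow> complex \<Rightarrow> complex" where
  "d3 u1 u2 u3 v1 v2 v3 w1 w2 w3 =
     u1 * (v2 * w3 - v3 * w2) - v1 * (u2 * w3 - u3 * w2) + w1 * (u2 * v3 - u3 * v2)"

lemma column_lemma:
  fixes t M b :: complex
  assumes M2: "M * M = 1"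
  and c1: "\<And>i. (t - 1) * P i 1 + (t - 1) * Q i 1 - M * b * t * Q i 2 - b^2 * t * Q i 3 = 0"
  and c2: "\<And>i. - 2 * M * t * P i 1 + (t - 1) * P i 2 + (t - 1) * Q i 2 + 2 * M * b * t * Q i 3 = 0"
  and c3: "\<And>i. - t * P i 1 + M * t * P i 2 + (t - 1) * P i 3 + (t - 1) * Q i 3 = 0"
  shows "4 * b * t^3 * d3 (P 1 1) (P 2 1) (P 3 1) (P 1 2) (P 2 2) (P 3 2) (P 1 3) (P 2 3) (P 3 3)
    = - ((t - 1)^3 * d3 (b * (P 1 2 + Q 1 2) + 2 * M * (P 1 1 + Q 1 1))
                       (b * (P 2 2 + Q 2 2) + 2 * M * (P 2 1 + Q 2 1))
                       (b * (P 3 2 + Q 3 2) + 2 * M * (P 3 1 + Q 3 1))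
                       (Q 1 3) (Q 2 3) (Q 3 3) (P 1 3) (P 2 3) (P 3 3))"
proof -
  let ?D = "d3 (P 1 1) (P 2 1) (P 3 1)"
  have S1: "t * M * d3 (P 1 1) (P 2 1) (P 3 1) (P 1 2) (P 2 2) (P 3 2) (P 1 3) (P 2 3) (P 3 3)
      = - (t - 1) * d3 (P 1 1) (P 2 1) (P 3 1) (Q 1 3) (Q 2 3) (Q 3 3) (P 1 3) (P 2 3) (P 3 3)"
    using c3[of 1] c3[of 2] c3[of 3] unfolding d3_def by algebra
  have S2: "2 * M * t * d3 (P 1 1) (P 2 1) (P 3 1) (Q 1 3) (Q 2 3) (Q 3 3) (P 1 3) (P 2 3) (P 3 3)
      = (t - 1) * d3 (P 1 2 + Q 1 2) (P 2 2 + Q 2 2) (P 3 2 + Q 3 2) (Q 1 3) (Q 2 3) (Q 3 3) (P 1 3) (P 2 3) (P 3 3)"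
    using c2[of 1] c2[of 2] c2[of 3] unfolding d3_def by algebra
  have S3: "t * d3 (P 1 2 + Q 1 2) (P 2 2 + Q 2 2) (P 3 2 + Q 3 2) (Q 1 3) (Q 2 3) (Q 3 3) (P 1 3) (P 2 3) (P 3 3)
      = d3 (M * t * P 1 1 + t * Q 1 2) (M * t * P 2 1 + t * Q 2 2) (M * t * P 3 1 + t * Q 3 2)
           (Q 1 3) (Q 2 3) (Q 3 3) (P 1 3) (P 2 3) (P 3 3)"
    using c3[of 1] c3[of 2] c3[of 3] M2 unfolding d3_def by algebra
  have S4: "2 * b * d3 (M * t * P 1 1 + t * Q 1 2) (M * t * P 2 1 + t * Q 2 2) (M * t * P 3 1 + t * Q 3 2)
           (Q 1 3) (Q 2 3) (Q 3 3) (P 1 3) (P 2 3) (P 3 3)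
      = (t - 1) * d3 (b * (P 1 2 + Q 1 2) + 2 * M * (P 1 1 + Q 1 1))
                       (b * (P 2 2 + Q 2 2) + 2 * M * (P 2 1 + Q 2 1))
                       (b * (P 3 2 + Q 3 2) + 2 * M * (P 3 1 + Q 3 1))
                       (Q 1 3) (Q 2 3) (Q 3 3) (P 1 3) (P 2 3) (P 3 3)"
    using c1[of 1] c1[of 2] c1[of 3] c2[of 1] c2[of 2] c2[of 3] M2 unfolding d3_def by algebra
  from S1 S2 S3 S4 M2 show ?thesis
    by (simp add: power3_eq_cube) algebra
qed


definition polyfun :: "(complex \<Rightarrow> complex) \<Rightarrow> bool" where
  "polyfun f \<longleftrightarrow> (\<exists>q. \<forall>t. f t = poly q t)"

definition polyfun_nz :: "(complex \<Rightarrow> complex) \<Rightarrow> bool" where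
  "polyfun_nz f \<longleftrightarrow> (\<exists>q. \<forall>t. t \<noteq> 0 \<longrightarrow> f t = poly q t)"

lemma polyfun_const [simp]: "polyfun (\<lambda>t. c)"
  unfolding polyfun_def by (rule exI[of _ "[:c:]"]) simp

lemma polyfun_id [simp]: "polyfun (\<lambda>t. t)"
  unfolding polyfun_def by (rule exI[of _ "[:0, 1:]"]) simp

lemma polyfun_add: "polyfun f \<Longrightarrow> polyfun g \<Longrightarrow> polyfun (\<lambda>t. f t + g t)"
  unfolding polyfun_def by (metis poly_add)

lemma polyfun_diff: "polyfun f \<Longrightarrow> polyfun g \<Longrightarrow> polyfun (\<lambda>t. f t - g t)"
  unfolding polyfun_def by (metis poly_diff)

lemma polyfun_mult: "polyfun f \<Longrightarrow> polyfun g \<Longrightarrow> polyfun (\<lambda>t. f t * g t)"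
  unfolding polyfun_def by (metis poly_mult)

lemma polyfun_minus: "polyfun f \<Longrightarrow> polyfun (\<lambda>t. - f t)"
  unfolding polyfun_def by (metis poly_minus)

lemma polyfun_power: "polyfun f \<Longrightarrow> polyfun (\<lambda>t. f t ^ n)"
  by (induction n) (simp_all add: polyfun_mult)

lemma polyfun_sum: "(\<And>j. j \<in> S \<Longrightarrow> polyfun (f j)) \<Longrightarrow> polyfun (\<lambda>t. \<Sum>j\<in>S. f j t)"
proof (induction S rule: infinite_finite_induct)
  case (insert x F) then show ?case by (simp add: polyfun_add)
qed simp_all

lemma polyfun_nz_add: "polyfun_nz f \<Longrightarrow> polyfun_nz g \<Longrightarrow> polyfun_nz (\<lambda>t. f t + g t)"
  unfolding polyfun_nz_def by (metis poly_add)

lemma polyfun_nz_diff: "polyfun_nz f \<Longrightarrow> polyfun_nz g \<Longrightarrow> polyfun_nz (\<lambda>t. f t - g t)"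
  unfolding polyfun_nz_def by (metis poly_diff)

lemma polyfun_nz_mult: "polyfun_nz f \<Longrightarrow> polyfun_nz g \<Longrightarrow> polyfun_nz (\<lambda>t. f t * g t)"
  unfolding polyfun_nz_def by (metis poly_mult)

lemma polyfun_nz_const [simp]: "polyfun_nz (\<lambda>t. c)"
  unfolding polyfun_nz_def by (rule exI[of _ "[:c:]"]) simp

lemma polyfun_nz_cong: "polyfun_nz f \<Longrightarrow> (\<And>t. t \<noteq> 0 \<Longrightarrow> f t = g t) \<Longrightarrow> polyfun_nz g"
  unfolding polyfun_nz_def by metis

lemma polyfun_nz_monom: "polyfun_nz (\<lambda>t. t ^ n)"
  unfolding polyfun_nz_def by (rule exI[of _ "monom 1 n"]) (simp add: poly_monom)

definition pmat :: "(complex \<Rightarrow> mat3) \<Rightarrow> bool" where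
  "pmat A \<longleftrightarrow> (\<forall>i j. polyfun (\<lambda>t. A t $ i $ j))"

definition pmat_nz :: "(complex \<Rightarrow> mat3) \<Rightarrow> bool" where
  "pmat_nz A \<longleftrightarrow> (\<forall>i j. polyfun_nz (\<lambda>t. A t $ i $ j))"

lemma pmat_const [simp]: "pmat (\<lambda>t. C)"
  by (simp add: pmat_def)

lemma pmat_add: "pmat A \<Longrightarrow> pmat B \<Longrightarrow> pmat (\<lambda>t. A t + B t)"
  by (simp add: pmat_def polyfun_add)

lemma pmat_diff: "pmat A \<Longrightarrow> pmat B \<Longrightarrow> pmat (\<lambda>t. A t - B t)"
  by (simp add: pmat_def polyfun_diff)

lemma pmat_mult: "pmat A \<Longrightarrow> pmat B \<Longrightarrow> pmat (\<lambda>t. A t ** B t)"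
  unfolding pmat_def matrix_matrix_mult_def
  by (simp add: sum_3 polyfun_add polyfun_mult)

lemma pmat_smult: "polyfun c \<Longrightarrow> pmat A \<Longrightarrow> pmat (\<lambda>t. smult3 (c t) (A t))"
  by (simp add: pmat_def polyfun_mult)

lemma pmat_sum: "(\<And>j. j \<in> S \<Longrightarrow> pmat (A j)) \<Longrightarrow> pmat (\<lambda>t. \<Sum>j\<in>S. A j t)"
  unfolding pmat_def by (simp add: polyfun_sum)

lemma polyfun_det: "pmat A \<Longrightarrow> polyfun (\<lambda>t. det (A t))"
  unfolding pmat_def det_3 by (simp add: polyfun_add polyfun_diff polyfun_mult)

lemma pmat_nz_add: "pmat_nz A \<Longrightarrow> pmat_nz B \<Longrightarrow> pmat_nz (\<lambda>t. A t + B t)"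
  by (simp add: pmat_nz_def polyfun_nz_add)

lemma pmat_nz_smult_monom: "pmat_nz A \<Longrightarrow> pmat_nz (\<lambda>t. smult3 (t ^ n) (A t))"
  by (simp add: pmat_nz_def polyfun_nz_mult polyfun_nz_monom)

definition Kb :: "zgroupring \<Rightarrow> nat" where
  "Kb s = sum_list (map (\<lambda>(c, v). nat \<bar>expsum v\<bar>) s)"

lemma Phi_laurent:
  "K \<ge> Kb s \<Longrightarrow> pmat_nz (\<lambda>t. smult3 (t ^ K) (Phi M y t s))"
proof (induction s arbitrary: K)
  case Nil then show ?case by (simp add: pmat_nz_def)
next
  case (Cons a s)
  obtain c v where a: "a = (c, v)" by fastforce
  have K1: "K \<ge> Kb s" and K2: "int K + expsum v \<ge> 0"
    using Cons.prems by (auto simp: Kb_def a)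
  have "pmat_nz (\<lambda>t. smult3 (t ^ K) (smult3 (of_int c) (Phi1 M y t v)))"
  proof -
    have A: "pmat_nz (\<lambda>t. smult3 (t ^ nat (int K + expsum v)) (smult3 (of_int c) (Ad (rho_word M y v))))"
      by (rule pmat_nz_smult_monom) (simp add: pmat_nz_def)
    have B: "t \<noteq> 0 \<Longrightarrow> smult3 (t ^ nat (int K + expsum v)) (smult3 (of_int c) (Ad (rho_word M y v)))
        = smult3 (t ^ K) (smult3 (of_int c) (Phi1 M y t v))" for t
    proof -
      assume t: "t \<noteq> 0"
      have "t ^ nat (int K + expsum v) = t powi (int K + expsum v)"
        using K2 by (simp add: power_int_def)
      also have "\<dots> = t ^ K * t powi expsum v" using t by (simp add: power_int_add)
      finally show ?thesis by (simp add: Phi1_def smult3_smult3 mult_ac)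
    qed
    show ?thesis unfolding pmat_nz_def
    proof (intro allI)
      fix i j
      have "polyfun_nz (\<lambda>t. smult3 (t ^ nat (int K + expsum v)) (smult3 (of_int c) (Ad (rho_word M y v))) $ i $ j)"
        using A by (simp only: pmat_nz_def)
      then show "polyfun_nz (\<lambda>t. smult3 (t ^ K) (smult3 (of_int c) (Phi1 M y t v)) $ i $ j)"
        by (rule polyfun_nz_cong) (metis B)
    qed
  qed
  moreover have "pmat_nz (\<lambda>t. smult3 (t ^ K) (Phi M y t s))" using Cons.IH[OF K1] .
  ultimately show ?case
    by (simp add: a Phi_Cons smult3_add_right pmat_nz_add)
qed

lemma wpow_Suc': "wpow u (Suc j) = wpow u j @ u"
  by (induction j) simp_all

lemma wpow_add: "wpow u (i + j) = wpow u i @ wpow u j"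
  by (induction i) simp_all

lemma expsum_wpow: "expsum (wpow u j) = int j * expsum u"
  by (induction j) (simp_all add: expsum_append algebra_simps)

lemma rho_wpow: "rho_word M y (wpow u j) = mpow (rho_word M y u) j"
  by (induction j) (simp_all add: rho_word_append)

lemma Phi1_wpow:
  assumes "M * M = 1" "t \<noteq> 0"
  shows "Phi1 M y t (wpow u j) = mpow (Phi1 M y t u) j"
  by (induction j) (simp_all add: Phi1_append[OF assms])

lemma Phi_fox_wpow:
  assumes "M * M = 1" "t \<noteq> 0"
  shows "Phi M y t (fox x (wpow u j)) = (\<Sum>i<j. mpow (Phi1 M y t u) i) ** Phi M y t (fox x u)"
proof (induction j)
  case 0 then show ?case by simp
next
  case (Suc j)
  have "Phi M y t (fox x (wpow u (Suc j))) = Phi M y t (fox x u) + Phi1 M y t u ** Phi M y t (fox x (wpow u j))"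
    by (simp add: Phi_fox_append[OF assms])
  also have "\<dots> = (mat 1 + (\<Sum>i<j. mpow (Phi1 M y t u) (Suc i))) ** Phi M y t (fox x u)"
    by (simp add: Suc matrix_mul_assoc matrix_sum_left matrix_add_rdistrib)
  also have "\<dots> = (\<Sum>i<Suc j. mpow (Phi1 M y t u) i) ** Phi M y t (fox x u)"
    by (simp only: sum.lessThan_Suc_shift mpow.simps(1))
  finally show ?case .
qed

lemma expsum_relator: "expsum (relator k n) = 0"
  by (simp add: relator_def expsum_append expsum_inv_word la_def lb'_def expsum_Cons)

lemma gtriv_expsum: "gtriv r u \<Longrightarrow> expsum r = 0 \<Longrightarrow> expsum u = 0"
  by (induction rule: gtriv.induct)
     (auto simp: expsum_append expsum_inv_word expsum_Cons inv_letter_def split: if_splits)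

section \<open>Riley relation\<close>

definition Wd :: "nat \<Rightarrow> nat \<Rightarrow> word" where "Wd k n = wpow (w_word k) n"

lemma relator_split: "relator k n = Wd k n @ [la] @ inv_word (Wd k n) @ [lb']"
  by (simp add: relator_def Wd_def)

lemma riley_rho:
  assumes M2: "M * M = 1" and r: "rho_word M y (relator k n) = mat 1"
  shows "rho_word M y (Wd k n) ** rho_letter M y la = rho_letter M y lb ** rho_word M y (Wd k n)"
proof -
  let ?W = "rho_word M y (Wd k n)" and ?Wi = "rho_word M y (inv_word (Wd k n))"
  let ?a = "rho_letter M y la" and ?b = "rho_letter M y lb" and ?b' = "rho_letter M y lb'"
  have bb: "?b' ** ?b = mat 1" using rho_letter_inv(1)[OF M2, of y lb] by (simp add: lb_def lb'_def inv_letter_def)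
  have WW: "?Wi ** ?W = mat 1" using rho_word_inv[OF M2] by blast
  have "?W ** ?a ** ?Wi ** ?b' = mat 1"
    using r by (simp add: relator_split rho_word_append rho_word_Cons matrix_mul_assoc)
  then have "?W ** ?a ** ?Wi ** ?b' ** ?b ** ?W = ?b ** ?W" by simp
  then show ?thesis using bb WW by (simp add: matrix_mul_assoc[symmetric])
qed


section \<open>Structure of the Fox matrix\<close>

lemma Phi1_relator:
  assumes M2: "M * M = 1" and r: "rho_word M y (relator k n) = mat 1"
  shows "Phi1 M y t (relator k n) = mat 1"
  by (simp add: Phi1_def expsum_relator r Ad_one)

lemma Phi1_Cons:
  assumes "M * M = 1" "t \<noteq> 0" "u \<noteq> []"
  shows "Phi1 M y t (l # u) = Phi1 M y t [l] ** Phi1 M y t u"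
  using Phi1_append[OF assms(1,2), where u = "[l]" and v = u] by simp

lemma P_structure:
  assumes M2: "M * M = 1" and t: "t \<noteq> 0" and r: "rho_word M y (relator k n) = mat 1"
  shows "Phi M y t (fox GA (relator k n))
    = (mat 1 - Phi1 M y t [lb]) ** Phi M y t (fox GA (Wd k n)) + Phi1 M y t (Wd k n)"
proof -
  let ?F = "Phi M y t (fox GA (Wd k n))" and ?Y = "Phi1 M y t (Wd k n)"
  let ?a = "Phi1 M y t [la]" and ?Yi = "Phi1 M y t (inv_word (Wd k n))"
  let ?b = "Phi1 M y t [lb]" and ?b' = "Phi1 M y t [lb']"
  have foxla: "Phi M y t (fox GA [la]) = mat 1" by (simp add: la_def Phi_single)
  have foxlb': "Phi M y t (fox GA [lb']) = 0" by (simp add: lb'_def)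
  have h1: "Phi M y t (fox GA (inv_word (Wd k n) @ [lb'])) = - ?Yi ** ?F"
    by (simp only: Phi_fox_append[OF M2 t] Phi_fox_inv_word[OF M2 t] foxlb' times0_right add_0_right)
  have h2: "Phi M y t (fox GA ([la] @ (inv_word (Wd k n) @ [lb']))) = mat 1 + ?a ** (- ?Yi ** ?F)"
    using Phi_fox_append[OF M2 t, where x = GA and u = "[la]" and v = "inv_word (Wd k n) @ [lb']"]
    by (simp only: foxla h1)
  have "Phi M y t (fox GA (relator k n)) = ?F + ?Y ** (mat 1 + ?a ** (- ?Yi ** ?F))"
    unfolding relator_split
    using Phi_fox_append[OF M2 t, where x = GA and u = "Wd k n" and v = "[la] @ (inv_word (Wd k n) @ [lb'])"]
    by (simp only: h2 append_assoc)
  also have "\<dots> = ?F + ?Y - (?Y ** ?a ** ?Yi) ** ?F"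
    by (simp add: matrix_add_ldistrib matrix_diff_ldistrib matrix_neg_left matrix_neg_right matrix_mul_assoc)
  also have "?Y ** ?a ** ?Yi = ?b"
  proof -
    have bb: "?b' ** ?b = mat 1" using Phi1_inv(1)[OF M2 t, where u = "[lb]"]
      by (simp add: inv_word_def lb_def lb'_def inv_letter_def)
    have "?Y ** ?a ** ?Yi ** ?b' = mat 1"
      using Phi1_relator[OF M2 r, of t] by (simp add: relator_split Phi1_append[OF M2 t] Phi1_Cons[OF M2 t] matrix_mul_assoc)
    then have "?Y ** ?a ** ?Yi ** ?b' ** ?b = ?b" by simp
    then show ?thesis using bb by (simp add: matrix_mul_assoc[symmetric])
  qed
  finally show ?thesis by (simp add: matrix_diff_rdistrib algebra_simps)
qed

lemma Ad_la: "M * M = 1 \<Longrightarrow> Ad (rho_letter M y la) = adf (mk2 M 1 0 M)"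
  by (simp add: la_def rho_letter_simps Ad_formula det_mk2)

lemma Ad_lb: "M * M = 1 \<Longrightarrow> Ad (rho_letter M y lb) = adf (mk2 M 0 (2 - y) M)"
  by (simp add: lb_def rho_letter_simps Ad_formula det_mk2)

lemma Phi1_la: "M * M = 1 \<Longrightarrow> Phi1 M y t [la] = smult3 t (adf (mk2 M 1 0 M))"
  by (simp add: Phi1_def la_def expsum_Cons rho_word_single Ad_la[unfolded la_def])

lemma Phi1_lb: "M * M = 1 \<Longrightarrow> Phi1 M y t [lb] = smult3 t (adf (mk2 M 0 (2 - y) M))"
  by (simp add: Phi1_def lb_def expsum_Cons rho_word_single Ad_lb[unfolded lb_def])

lemma col_eqs:
  fixes P Q :: mat3
  assumes M2: "M * M = 1"
  and E: "P ** (smult3 t (adf (mk2 M 1 0 M)) - mat 1) + Q ** (smult3 t (adf (mk2 M 0 b M)) - mat 1) = 0"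
  shows "(t - 1) * P$i$1 + (t - 1) * Q$i$1 - M * b * t * Q$i$2 - b^2 * t * Q$i$3 = 0"
    "- 2 * M * t * P$i$1 + (t - 1) * P$i$2 + (t - 1) * Q$i$2 + 2 * M * b * t * Q$i$3 = 0"
    "- t * P$i$1 + M * t * P$i$2 + (t - 1) * P$i$3 + (t - 1) * Q$i$3 = 0"
proof -
  have M2': "M^2 = 1" using M2 by (simp add: power2_eq_square)
  have MM: "M * (M * x) = x" for x using M2 by (simp add: mult.assoc[symmetric])
  have e: "(P ** (smult3 t (adf (mk2 M 1 0 M)) - mat 1) + Q ** (smult3 t (adf (mk2 M 0 b M)) - mat 1))$i$j = 0" for j
    using E by simp
  show "(t - 1) * P$i$1 + (t - 1) * Q$i$1 - M * b * t * Q$i$2 - b^2 * t * Q$i$3 = 0"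
    using e[of 1] by (simp add: matrix_matrix_mult_def sum_3 adf_def mat_def M2' algebra_simps)
  show "- 2 * M * t * P$i$1 + (t - 1) * P$i$2 + (t - 1) * Q$i$2 + 2 * M * b * t * Q$i$3 = 0"
    using e[of 2] by (simp add: matrix_matrix_mult_def sum_3 adf_def mat_def M2' algebra_simps MM)
  show "- t * P$i$1 + M * t * P$i$2 + (t - 1) * P$i$3 + (t - 1) * Q$i$3 = 0"
    using e[of 3] by (simp add: matrix_matrix_mult_def sum_3 adf_def mat_def M2' algebra_simps)
qed

lemma det_d3: "det (A::mat3) = d3 (A$1$1) (A$2$1) (A$3$1) (A$1$2) (A$2$2) (A$3$2) (A$1$3) (A$2$3) (A$3$3)"
  by (simp add: det_3 d3_def algebra_simps)

lemma d3_scale: "c^3 * d3 u1 u2 u3 v1 v2 v3 w1 w2 w3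
   = d3 (c * u1) (c * u2) (c * u3) (c * v1) (c * v2) (c * v3) (c * w1) (c * w2) (c * w3)"
  by (simp add: d3_def power3_eq_cube algebra_simps)

lemma polyfun_nz_d3:
  assumes "polyfun_nz u1" "polyfun_nz u2" "polyfun_nz u3" "polyfun_nz v1" "polyfun_nz v2" "polyfun_nz v3"
    "polyfun_nz w1" "polyfun_nz w2" "polyfun_nz w3"
  shows "polyfun_nz (\<lambda>t. d3 (u1 t) (u2 t) (u3 t) (v1 t) (v2 t) (v3 t) (w1 t) (w2 t) (w3 t))"
  unfolding d3_def using assms by (intro polyfun_nz_add polyfun_nz_diff polyfun_nz_mult)

lemma divisibility:
  assumes M2: "M * M = 1" and r: "rho_word M y (relator k n) = mat 1" and b: "y \<noteq> 2"
  shows "\<exists>a H. \<forall>t. t \<noteq> 0 \<longrightarrow> t ^ a * det (Phi M y t (fox GA (relator k n))) = (t - 1)^3 * poly H t"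
proof -
  define P where "P t = Phi M y t (fox GA (relator k n))" for t
  define Q where "Q t = Phi M y t (fox GB (relator k n))" for t
  define K where "K = max (Kb (fox GA (relator k n))) (Kb (fox GB (relator k n)))"
  define PP where "PP t = smult3 (t ^ K) (P t)" for t
  define QQ where "QQ t = smult3 (t ^ K) (Q t)" for t
  have pP: "pmat_nz PP" unfolding PP_def P_def by (rule Phi_laurent) (simp add: K_def)
  have pQ: "pmat_nz QQ" unfolding QQ_def Q_def by (rule Phi_laurent) (simp add: K_def)
  let ?b = "2 - y"
  define G where "G t = d3 (?b * (PP t$1$2 + QQ t$1$2) + 2 * M * (PP t$1$1 + QQ t$1$1))
                       (?b * (PP t$2$2 + QQ t$2$2) + 2 * M * (PP t$2$1 + QQ t$2$1))
                       (?b * (PP t$3$2 + QQ t$3$2) + 2 * M * (PP t$3$1 + QQ t$3$1))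
                       (QQ t$1$3) (QQ t$2$3) (QQ t$3$3) (PP t$1$3) (PP t$2$3) (PP t$3$3)" for t
  have "polyfun_nz G"
    unfolding G_def using pP pQ unfolding pmat_nz_def
    by (intro polyfun_nz_d3 polyfun_nz_add polyfun_nz_mult polyfun_nz_const) auto
  then obtain H0 where H0: "\<And>t. t \<noteq> 0 \<Longrightarrow> G t = poly H0 t" unfolding polyfun_nz_def by blast
  have key: "t ^ (3 + 3 * K) * det (P t) = (t - 1)^3 * poly (smult (- 1 / (4 * ?b)) H0) t"
    if t: "t \<noteq> 0" for t
  proof -
    have E: "P t ** (smult3 t (adf (mk2 M 1 0 M)) - mat 1) + Q t ** (smult3 t (adf (mk2 M 0 ?b M)) - mat 1) = 0"
      using fundamental[OF M2 t, of y "relator k n"] Phi1_relator[OF M2 r, of t]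
      by (simp add: P_def Q_def Phi1_la[OF M2] Phi1_lb[OF M2])
    have Et: "PP t ** (smult3 t (adf (mk2 M 1 0 M)) - mat 1) + QQ t ** (smult3 t (adf (mk2 M 0 ?b M)) - mat 1) = 0"
    proof -
      have "smult3 (t ^ K) (P t ** (smult3 t (adf (mk2 M 1 0 M)) - mat 1) + Q t ** (smult3 t (adf (mk2 M 0 ?b M)) - mat 1)) = 0"
        using E by simp
      then show ?thesis by (simp add: PP_def QQ_def smult3_add_right smult3_mult_left)
    qed
    have cl: "4 * ?b * t^3 * d3 (PP t$1$1) (PP t$2$1) (PP t$3$1) (PP t$1$2) (PP t$2$2) (PP t$3$2) (PP t$1$3) (PP t$2$3) (PP t$3$3)
        = - ((t - 1)^3 * G t)"
      unfolding G_def
      by (rule column_lemma[where P = "\<lambda>i j. PP t $ i $ j" and Q = "\<lambda>i j. QQ t $ i $ j", OF M2])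
         (rule col_eqs[OF M2 Et])+
    have "d3 (PP t$1$1) (PP t$2$1) (PP t$3$1) (PP t$1$2) (PP t$2$2) (PP t$3$2) (PP t$1$3) (PP t$2$3) (PP t$3$3)
        = (t ^ K)^3 * det (P t)"
      by (simp add: det_d3 d3_scale PP_def)
    then have "4 * ?b * t^3 * ((t ^ K)^3 * det (P t)) = - ((t - 1)^3 * poly H0 t)"
      using cl H0[OF t] by simp
    moreover have "?b \<noteq> 0" using b by simp
    ultimately show ?thesis
      by (simp add: power_add power_mult field_simps)
  qed
  then show ?thesis unfolding P_def by blast
qed

lemma poly_eq_nz:
  fixes p q :: "complex poly"
  assumes "\<And>t. t \<noteq> 0 \<Longrightarrow> poly p t = poly q t"
  shows "p = q"
proof (rule ccontr)
  assume "p \<noteq> q"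
  then have "p - q \<noteq> 0" by simp
  then have fin: "finite {x. poly (p - q) x = 0}" by (rule poly_roots_finite)
  have "UNIV - {0::complex} \<subseteq> {x. poly (p - q) x = 0}" using assms by auto
  moreover have "infinite (UNIV - {0::complex})"
    by (simp add: infinite_UNIV_char_0)
  ultimately show False using fin finite_subset by blast
qed

lemma rev_identity:
  fixes F G :: "complex poly"
  assumes rel: "\<And>t. t \<noteq> 0 \<Longrightarrow> poly G t = t ^ d * poly F (1 / t)"
  shows "monom 1 (degree F) * G = monom 1 d * reflect_poly F"
proof (rule poly_eq_nz)
  fix t :: complex assume t: "t \<noteq> 0"
  show "poly (monom 1 (degree F) * G) t = poly (monom 1 d * reflect_poly F) t"
    using rel[OF t] t by (simp add: poly_monom poly_reflect_poly_nz divide_inverse)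
qed

lemma rev_deg:
  fixes F G :: "complex poly"
  assumes F0: "coeff F 0 \<noteq> 0" and rel: "\<And>t. t \<noteq> 0 \<Longrightarrow> poly G t = t ^ d * poly F (1 / t)"
  shows "degree G = d"
proof -
  have id: "monom 1 (degree F) * G = monom 1 d * reflect_poly F" by (rule rev_identity[OF rel])
  have Fnz: "F \<noteq> 0" using F0 by auto
  have Gnz: "G \<noteq> 0"
  proof
    assume "G = 0"
    then have "monom 1 d * reflect_poly F = 0" using id by simp
    then show False using Fnz by (simp add: monom_eq_0_iff)
  qed
  have "degree (monom 1 (degree F) * G) = degree F + degree G"
    using Gnz by (simp add: degree_mult_eq degree_monom_eq)
  moreover have "degree (monom 1 d * reflect_poly F) = d + degree F"
    using Fnz F0 by (simp add: degree_mult_eq degree_monom_eq)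
  ultimately show ?thesis using id by simp
qed

lemma rev_lead:
  fixes F G :: "complex poly"
  assumes F0: "coeff F 0 \<noteq> 0" and rel: "\<And>t. t \<noteq> 0 \<Longrightarrow> poly G t = t ^ d * poly F (1 / t)"
    and dF: "degree F = d"
  shows "coeff G 0 = lead_coeff F"
proof -
  have id: "monom 1 d * G = monom 1 d * reflect_poly F" using rev_identity[OF rel] dF by simp
  have "G = reflect_poly F" using id by (simp add: monom_eq_0_iff)
  then show ?thesis by simp
qed

lemma finish:
  fixes N f g :: "complex \<Rightarrow> complex"
  assumes pf: "polyfun f" and pg: "polyfun g"
    and fN: "\<And>t. t \<noteq> 0 \<Longrightarrow> f t = t ^ e * N t"
    and gf: "\<And>t. t \<noteq> 0 \<Longrightarrow> g t = t ^ d * f (1 / t)"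
    and f0: "f 0 = c0" and g0: "g 0 = cd" and c0: "c0 \<noteq> 0" and cd: "cd \<noteq> 0"
    and dv: "\<exists>a H. \<forall>t. t \<noteq> 0 \<longrightarrow> t ^ a * N t = (t - 1)^3 * poly H t"
  shows "\<exists>q. degree q = d - 3 \<and> d \<ge> 3 \<and> lead_coeff q = cd \<and> coeff q 0 = - c0 \<and>
    (\<forall>t. t \<noteq> 0 \<longrightarrow> t ^ e * N t = (t - 1)^3 * poly q t)"
proof -
  obtain F where F: "\<And>t. f t = poly F t" using pf unfolding polyfun_def by blast
  obtain G where G: "\<And>t. g t = poly G t" using pg unfolding polyfun_def by blast
  have F0: "coeff F 0 = c0" using f0 F[of 0] by (simp add: poly_0_coeff_0)
  have G0: "coeff G 0 = cd" using g0 G[of 0] by (simp add: poly_0_coeff_0)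
  have relGF: "poly G t = t ^ d * poly F (1 / t)" if "t \<noteq> 0" for t
    using gf[OF that] F G by simp
  have relFG: "poly F t = t ^ d * poly G (1 / t)" if t: "t \<noteq> 0" for t
  proof -
    have "poly G (1 / t) = (1 / t) ^ d * poly F t" using relGF[of "1 / t"] t by simp
    then show ?thesis using t by (simp add: power_one_over field_simps)
  qed
  have dG: "degree G = d" using rev_deg[OF _ relGF] F0 c0 by simp
  have dF: "degree F = d" using rev_deg[OF _ relFG] G0 cd by simp
  have lF: "lead_coeff F = cd" using rev_lead[OF _ relGF dF] F0 c0 G0 by simp
  obtain a H where H: "\<And>t. t \<noteq> 0 \<Longrightarrow> t ^ a * N t = (t - 1)^3 * poly H t" using dv by blast
  have "monom 1 a * F = [:-1, 1:]^3 * (monom 1 e * H)"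
  proof (rule poly_eq_nz)
    fix t :: complex assume t: "t \<noteq> 0"
    have "poly (monom 1 a * F) t = t ^ a * f t" using F[of t] by (simp add: poly_monom)
    also have "\<dots> = t ^ e * (t ^ a * N t)" using fN[OF t] by (simp add: algebra_simps)
    also have "\<dots> = t ^ e * ((t - 1)^3 * poly H t)" using H[OF t] by simp
    also have "\<dots> = poly ([:-1, 1:]^3 * (monom 1 e * H)) t" by (simp add: poly_monom algebra_simps)
    finally show "poly (monom 1 a * F) t = poly ([:-1, 1:]^3 * (monom 1 e * H)) t" .
  qed
  then have dvd1: "[:-1, 1:]^3 dvd monom 1 a * F" by (metis dvd_triv_left)
  have Fnz: "F \<noteq> 0" using F0 c0 by auto
  have mnz: "monom (1::complex) a \<noteq> 0" by (simp add: monom_eq_0_iff)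
  have "order 1 (monom (1::complex) a) = 0"
    using order_root[of "monom (1::complex) a" 1] mnz by (simp add: poly_monom)
  then have "order 1 (monom 1 a * F) = order 1 F" using Fnz mnz by (simp add: order_mult)
  then have "3 \<le> order 1 F" using dvd1 Fnz mnz by (simp add: order_divides)
  then have "[:-1, 1:]^3 dvd F" by (simp add: order_divides)
  then obtain q where q: "F = [:-1, 1:]^3 * q" by (elim dvdE)
  have qnz: "q \<noteq> 0" using Fnz q by auto
  have deg3: "degree ([:-1, 1:]^3 :: complex poly) = 3" by (simp add: degree_power_eq)
  have "degree F = 3 + degree q" using q qnz deg3 by (simp add: degree_mult_eq)
  then have dq: "degree q = d - 3" "d \<ge> 3" using dF by auto
  have lq: "lead_coeff q = cd" using lF q by (simp add: lead_coeff_mult lead_coeff_power)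
  have cq: "coeff q 0 = - c0"
  proof -
    have "poly F 0 = - poly q 0" using q by simp
    then show ?thesis using F0 by (simp add: poly_0_coeff_0)
  qed
  have "t ^ e * N t = (t - 1)^3 * poly q t" if "t \<noteq> 0" for t
    using fN[OF that] F[of t] q by simp
  then show ?thesis using dq lq cq by blast
qed

lemma det_smult3: "det (smult3 c A) = c^3 * det A"
  by (simp add: det_3 power3_eq_cube algebra_simps)

lemma det_neg3: "det (- (A::mat3)) = - det A"
  by (simp add: det_3 algebra_simps)

lemma Phi1_exp0: "expsum u = 0 \<Longrightarrow> Phi1 M y t u = Ad (rho_word M y u)"
  by (simp add: Phi1_def)

lemma Phi1_exp1: "expsum u = 1 \<Longrightarrow> Phi1 M y t u = smult3 t (Ad (rho_word M y u))"
  by (simp add: Phi1_def)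

lemma Phi1_expm1: "expsum u = -1 \<Longrightarrow> Phi1 M y t u = smult3 (inverse t) (Ad (rho_word M y u))"
  by (simp add: Phi1_def power_int_minus)

lemma Phi1_exp2: "expsum u = 2 \<Longrightarrow> Phi1 M y t u = smult3 (t^2) (Ad (rho_word M y u))"
  by (simp add: Phi1_def)

abbreviation lc :: word where "lc \<equiv> [lb, la']"
abbreviation ld :: word where "ld \<equiv> [lb', la]"

lemma expsum_lc: "expsum lc = 0" by (simp add: expsum_Cons la'_def lb_def)
lemma expsum_ld: "expsum ld = 0" by (simp add: expsum_Cons la_def lb'_def)

lemma trace_lc: "M * M = 1 \<Longrightarrow> trace (rho_word M y lc) = y"
  by (simp add: rho_word_Cons la'_def lb_def rho_letter_simps mk2_mult mat1_mk2 trace_def sum_2)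

lemma trace_ld: "M * M = 1 \<Longrightarrow> trace (rho_word M y ld) = y"
  by (simp add: rho_word_Cons la_def lb'_def rho_letter_simps mk2_mult mat1_mk2 trace_def sum_2)

lemma fox_lc: "Phi M y t (fox GA lc) = - Phi1 M y t lc"
  by (simp add: la'_def lb_def Phi_single smult3_minus_left)

lemma fox_ld: "Phi M y t (fox GA ld) = Phi1 M y t [lb']"
  by (simp add: la_def lb'_def Phi_single)

lemma den_formula:
  assumes "M * M = 1"
  shows "adj_tap_den M y t = (1 - t)^3"
proof -
  have eq: "Phi M y t [(1, []), (-1, [lb])] = mat 1 - smult3 t (adf (mk2 M 0 (2 - y) M))"
    using assms by (simp add: Phi_Cons Phi1_lb smult3_minus_left)
  have M2': "M^2 = 1" using assms by (simp add: power2_eq_square)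
  have MM: "M * (M * x) = x" for x using assms by (simp add: mult.assoc[symmetric])
  have "adj_tap_den M y t = det (mat 1 - smult3 t (adf (mk2 M 0 (2 - y) M)))"
    by (simp only: adj_tap_den_def eq)
  also have "\<dots> = (1 - t)^3"
    by (simp add: det_3 adf_def mat_def M2' power3_eq_cube algebra_simps MM)
  finally show ?thesis .
qed

lemma matrix_sum_smult: "smult3 c (\<Sum>(j::nat)<n. A j) = (\<Sum>j<n. smult3 c (A j))"
  by (induction n) (simp_all add: smult3_add_right)

lemma telescope: "(\<Sum>j<m. mpow D j) ** (D - mat 1) = mpow (D::mat3) m - mat 1"
proof (induction m)
  case 0 then show ?case by simp
next
  case (Suc m)
  have "(\<Sum>j<Suc m. mpow D j) ** (D - mat 1) = (\<Sum>j<m. mpow D j) ** (D - mat 1) + mpow D m ** (D - mat 1)"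
    by (simp add: matrix_add_rdistrib)
  also have "\<dots> = mpow D (Suc m) - mat 1"
    using Suc by (simp add: matrix_diff_ldistrib mpow_Suc'[symmetric])
  finally show ?case .
qed


section \<open>Even case\<close>

lemma w_even: "even k \<Longrightarrow> w_word k = wpow lc (k div 2) @ wpow ld (k div 2)"
  by (simp add: w_word_def Let_def)

lemma w_odd: "odd k \<Longrightarrow> w_word k = wpow lc (k div 2) @ [lb, la] @ wpow ld (k div 2)"
  by (simp add: w_word_def Let_def)

lemma expsum_lb: "expsum [lb] = 1" by (simp add: expsum_Cons lb_def)
lemma expsum_lb': "expsum [lb'] = -1" by (simp add: expsum_Cons lb'_def)

lemma even_structure:
  assumes M2: "M * M = 1" and r: "rho_word M y (relator k n) = mat 1" and ev: "even k" and t: "t \<noteq> 0"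
  defines "m \<equiv> k div 2"
    and "C \<equiv> Ad (rho_word M y lc)" and "Dd \<equiv> Ad (rho_word M y ld)"
    and "B \<equiv> Ad (rho_word M y [lb])" and "Bi \<equiv> Ad (rho_word M y [lb'])"
    and "X \<equiv> Ad (rho_word M y (w_word k))"
  shows "smult3 t (Phi M y t (fox GA (relator k n)))
     = (mat 1 - smult3 t B) ** (\<Sum>j<n. mpow X j) **
       (mpow C m ** (\<Sum>j<m. mpow Dd j) ** Bi + smult3 t (- ((\<Sum>j<m. mpow C j) ** C)))
       + smult3 t (mpow X n)"
proof -
  have wk: "w_word k = wpow lc m @ wpow ld m" using ev by (simp add: w_even m_def)
  have ew: "expsum (w_word k) = 0" by (simp add: wk expsum_append expsum_wpow expsum_lc expsum_ld)
  have PX: "Phi1 M y t (w_word k) = X" by (simp add: Phi1_exp0[OF ew] X_def)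
  have PC: "Phi1 M y t lc = C" by (simp add: Phi1_exp0[OF expsum_lc] C_def)
  have PD: "Phi1 M y t ld = Dd" by (simp add: Phi1_exp0[OF expsum_ld] Dd_def)
  have Pb: "Phi1 M y t [lb] = smult3 t B" by (simp add: Phi1_exp1[OF expsum_lb] B_def)
  have Pb': "Phi1 M y t [lb'] = smult3 (inverse t) Bi" by (simp add: Phi1_expm1[OF expsum_lb'] Bi_def)
  have Fw: "Phi M y t (fox GA (w_word k))
      = - ((\<Sum>j<m. mpow C j) ** C) + smult3 (inverse t) (mpow C m ** (\<Sum>j<m. mpow Dd j) ** Bi)"
    unfolding wk Phi_fox_append[OF M2 t] Phi_fox_wpow[OF M2 t] Phi1_wpow[OF M2 t] fox_lc fox_ld PC PD Pb'
    by (simp add: matrix_neg_right smult3_mult_right matrix_mul_assoc)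
  have P: "Phi M y t (fox GA (relator k n))
      = (mat 1 - smult3 t B) ** ((\<Sum>j<n. mpow X j) ** Phi M y t (fox GA (w_word k))) + mpow X n"
    unfolding P_structure[OF M2 t r] Wd_def Phi_fox_wpow[OF M2 t] Phi1_wpow[OF M2 t] PX Pb ..
  have tt: "t * inverse t = 1" using t by simp
  let ?Z = "(mat 1 - smult3 t B) ** (\<Sum>j<n. mpow X j)"
  have W: "smult3 t (Phi M y t (fox GA (w_word k)))
      = mpow C m ** (\<Sum>j<m. mpow Dd j) ** Bi + smult3 t (- ((\<Sum>j<m. mpow C j) ** C))"
    unfolding Fw smult3_add_right smult3_smult3 tt smult3_one by (rule add.commute)
  have "smult3 t (Phi M y t (fox GA (relator k n)))
      = ?Z ** smult3 t (Phi M y t (fox GA (w_word k))) + smult3 t (mpow X n)"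
    unfolding P by (simp add: smult3_add_right smult3_mult_right matrix_mul_assoc)
  then show ?thesis unfolding W .
qed


lemma smult3_sandwich: "smult3 (a * b) (A ** S ** Z) = smult3 a A ** S ** smult3 b Z"
  by (simp add: smult3_mult_left smult3_mult_right smult3_smult3 matrix_mul_assoc mult.commute)

lemma det_sum_mpow_Ad:
  assumes "det g = 1"
  shows "det (\<Sum>j<n. mpow (Ad g) j) = of_nat n * (chU n (trace g))^2"
  using det_geom_Ad[OF assms] .

lemma tap_shape_intro:
  assumes "degree p = D" "lead_coeff p = c" "coeff p 0 = s' * c" "s \<in> {1, -1}" "s' \<in> {1, -1}"
    "\<And>t. t \<noteq> 0 \<Longrightarrow> den t \<noteq> 0 \<Longrightarrow> Delta t = s * t powi i * poly p t"
  shows "tap_shape Delta den D c"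
  unfolding tap_shape_def using assms by blast

lemma even_case:
  assumes M2: "M * M = 1" and r: "rho_word M y (relator k n) = mat 1" and ev: "even k"
    and k1: "k \<ge> 1" and n1: "n \<ge> 1" and b: "y \<noteq> 2"
    and cnz: "chU (k div 2) y \<noteq> 0" and znz: "chU n (trace (rho_word M y (w_word k))) \<noteq> 0"
  shows "tap_shape (adj_tap k n M y) (adj_tap_den M y) 3
      (of_nat ((k div 2) * n) * (cheb_S (k div 2 - 1) y)^2 * (cheb_S (n - 1) (trace (rho_word M y (w_word k))))^2)"
proof -
  define m where "m = k div 2"
  have m1: "m \<ge> 1" using ev k1 unfolding m_def by presburger
  define z where "z = trace (rho_word M y (w_word k))"
  define C where "C = Ad (rho_word M y lc)"
  define Dd where "Dd = Ad (rho_word M y ld)"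
  define B where "B = Ad (rho_word M y [lb])"
  define Bi where "Bi = Ad (rho_word M y [lb'])"
  define X where "X = Ad (rho_word M y (w_word k))"
  define S where "S = (\<Sum>j<n. mpow X j)"
  define Fm where "Fm = mpow C m ** (\<Sum>j<m. mpow Dd j) ** Bi"
  define F0 where "F0 = - ((\<Sum>j<m. mpow C j) ** C)"
  define N where "N t = det (Phi M y t (fox GA (relator k n)))" for t
  define PP where "PP t = (mat 1 - smult3 t B) ** S ** (Fm + smult3 t F0) + smult3 t (mpow X n)" for t
  define PR where "PR t = (smult3 t (mat 1) - B) ** S ** (smult3 t Fm + F0) + smult3 t (mpow X n)" for t
  define c where "c = of_nat n * (chU n z)^2 * (of_nat m * (chU m y)^2)"
  have dets: "det C = 1" "det B = 1" "det Bi = 1" "det (mpow C m) = 1"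
    using M2 by (simp_all add: C_def B_def Bi_def Ad_det rho_word_det det_mpow)
  have dS: "det S = of_nat n * (chU n z)^2"
    unfolding S_def X_def z_def by (rule det_geom_Ad) (simp add: rho_word_det M2)
  have dSD: "det (\<Sum>j<m. mpow Dd j) = of_nat m * (chU m y)^2"
    unfolding Dd_def using det_geom_Ad[of "rho_word M y ld" m] trace_ld[OF M2] by (simp add: rho_word_det M2)
  have dSC: "det (\<Sum>j<m. mpow C j) = of_nat m * (chU m y)^2"
    unfolding C_def using det_geom_Ad[of "rho_word M y lc" m] trace_lc[OF M2] by (simp add: rho_word_det M2)
  have pPP: "pmat PP" unfolding PP_def
    by (intro pmat_add pmat_mult pmat_diff pmat_smult pmat_const polyfun_id)
  have pPR: "pmat PR" unfolding PR_def
    by (intro pmat_add pmat_mult pmat_diff pmat_smult pmat_const polyfun_id)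
  have fN: "det (PP t) = t ^ 3 * N t" if t: "t \<noteq> 0" for t
  proof -
    have "PP t = smult3 t (Phi M y t (fox GA (relator k n)))"
      unfolding PP_def S_def Fm_def F0_def
      using even_structure[OF M2 r ev t] by (simp add: m_def C_def Dd_def B_def Bi_def X_def)
    then show ?thesis by (simp add: N_def det_smult3)
  qed
  have gf: "det (PR t) = t ^ 6 * det (PP (1 / t))" if t: "t \<noteq> 0" for t
  proof -
    have "smult3 (t * t) ((mat 1 - smult3 (1 / t) B) ** S ** (Fm + smult3 (1 / t) F0))
        = smult3 t (mat 1 - smult3 (1 / t) B) ** S ** smult3 t (Fm + smult3 (1 / t) F0)"
      by (rule smult3_sandwich)
    also have "\<dots> = (smult3 t (mat 1) - B) ** S ** (smult3 t Fm + F0)"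
      using t by (simp add: smult3_diff_right smult3_add_right smult3_smult3)
    finally have "smult3 (t * t) (PP (1 / t)) = PR t"
      unfolding PP_def PR_def using t by (simp add: smult3_add_right smult3_smult3)
    then have "det (PR t) = (t * t)^3 * det (PP (1 / t))" by (metis det_smult3)
    then show ?thesis by (simp add: power_mult_distrib[symmetric] power_add[symmetric] power2_eq_square[symmetric]
        power_mult[symmetric])
  qed
  have f0: "det (PP 0) = c"
    by (simp add: PP_def det_mul dS Fm_def dets dSD c_def)
  have g0: "det (PR 0) = c"
    by (simp add: PR_def det_mul det_neg3 dS F0_def dets dSC c_def matrix_neg_left)
  have cnz': "c \<noteq> 0" using cnz znz n1 m1 by (simp add: c_def m_def z_def)
  obtain q where q: "degree q = 6 - 3" "lead_coeff q = c" "coeff q 0 = - c"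
    "\<And>t. t \<noteq> 0 \<Longrightarrow> t ^ 3 * N t = (t - 1)^3 * poly q t"
    using finish[of "\<lambda>t. det (PP t)" "\<lambda>t. det (PR t)" 3 N 6 c c,
        OF polyfun_det[OF pPP] polyfun_det[OF pPR] fN gf f0 g0 cnz' cnz']
      divisibility[OF M2 r b] unfolding N_def by blast
  have cc: "of_nat ((k div 2) * n) * (cheb_S (k div 2 - 1) y)^2 * (cheb_S (n - 1) (trace (rho_word M y (w_word k))))^2 = c"
    using m1 n1 by (simp add: c_def m_def[symmetric] z_def[symmetric] cheb_S_chU)
  show ?thesis unfolding cc
  proof (rule tap_shape_intro[where p = q and s' = "-1" and s = "-1" and i = "-3"])
    show "degree q = 3" using q by simp
    show "lead_coeff q = c" using q by simp
    show "coeff q 0 = -1 * c" using q by simp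
    show "(-1::complex) \<in> {1, -1}" by simp
    show "(-1::complex) \<in> {1, -1}" by simp
    fix t :: complex assume t: "t \<noteq> 0" and dn: "adj_tap_den M y t \<noteq> 0"
    have t1: "(1 - t)^3 \<noteq> 0" using dn by (simp add: den_formula[OF M2])
    have den: "det (Phi M y t [(1, []), (-1, [lb])]) = (1 - t)^3"
      using den_formula[OF M2, of y t] by (simp add: adj_tap_den_def)
    have "adj_tap k n M y t = N t / (1 - t)^3"
      by (simp add: adj_tap_def N_def den)
    also have "\<dots> = - (t powi -3 * poly q t)"
    proof -
      have "N t = (t - 1)^3 * poly q t / t ^ 3" using q(4)[OF t] t by (simp add: field_simps)
      moreover have "(t - 1)^3 = - ((1 - t)^3)" by (simp add: power3_eq_cube algebra_simps)
      ultimately show ?thesis using t t1 by (simp add: power_int_minus field_simps)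
    qed
    finally show "adj_tap k n M y t = -1 * t powi -3 * poly q t" by simp
  qed
qed

section \<open>Odd case\<close>

definition Adw :: "complex \<Rightarrow> complex \<Rightarrow> word \<Rightarrow> mat3" where
  "Adw M y u = Ad (rho_word M y u)"

lemma Adw_append: "M * M = 1 \<Longrightarrow> Adw M y (u @ v) = Adw M y u ** Adw M y v"
  by (simp add: Adw_def rho_word_append Ad_mult rho_word_det)

lemma Adw_inv:
  assumes "M * M = 1"
  shows "Adw M y (inv_word u) ** Adw M y u = mat 1" "Adw M y u ** Adw M y (inv_word u) = mat 1"
  using assms by (simp_all add: Adw_def Ad_mult rho_word_det rho_word_inv Ad_one)

lemma Adw_wpow: "M * M = 1 \<Longrightarrow> Adw M y (wpow u j) = mpow (Adw M y u) j"
  by (simp add: Adw_def rho_wpow Ad_mpow rho_word_det)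

lemma Adw_det: "M * M = 1 \<Longrightarrow> det (Adw M y u) = 1"
  by (simp add: Adw_def Ad_det rho_word_det)

lemma mpow_smult3: "mpow (smult3 c A) j = smult3 (c ^ j) (mpow A j)"
  by (induction j) (simp_all add: smult3_mult_left smult3_mult_right smult3_smult3 mult.commute)

lemma odd_top:
  assumes M2: "M * M = 1" and r: "rho_word M y (relator k n) = mat 1" and od: "odd k" and n1: "n \<ge> 1"
  defines "m \<equiv> k div 2"
  shows "det (mpow (Adw M y (w_word k)) n - Adw M y [lb] ** mpow (Adw M y (w_word k)) (n - 1) **
      (mpow (Adw M y lc) m ** (Adw M y [lb] + Adw M y [lb] ** Adw M y [la] ** (\<Sum>j<m. mpow (Adw M y ld) j) ** Adw M y [lb'])))
    = - det (\<Sum>j<m. mpow (Adw M y ld) j)"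
proof -
  let ?Ad = "Adw M y"
  define X where "X = ?Ad (w_word k)"
  define A where "A = ?Ad [la]" define Ai where "Ai = ?Ad [la']"
  define B where "B = ?Ad [lb]" define Bi where "Bi = ?Ad [lb']"
  define Dd where "Dd = ?Ad ld"
  define SD where "SD = (\<Sum>j<m. mpow Dd j)"
  define F1 where "F1 = mpow (?Ad lc) m ** (B + B ** A ** SD ** Bi)"
  define Xi where "Xi = ?Ad (inv_word (w_word k))"
  have wk: "w_word k = wpow lc m @ [lb, la] @ wpow ld m" using od by (simp add: w_odd m_def)
  have invs: "inv_word [la] = [la']" "inv_word [lb] = [lb']"
    by (simp_all add: inv_word_def la_def la'_def lb_def lb'_def inv_letter_def)
  have AAi: "Ai ** A = mat 1" "A ** Ai = mat 1"
    using Adw_inv[OF M2, of y "[la]"] by (simp_all add: invs A_def Ai_def)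
  have BBi: "Bi ** B = mat 1" "B ** Bi = mat 1"
    using Adw_inv[OF M2, of y "[lb]"] by (simp_all add: invs B_def Bi_def)
  have XXi: "X ** Xi = mat 1" "Xi ** X = mat 1"
    using Adw_inv[OF M2, of y "w_word k"] by (simp_all add: X_def Xi_def)
  have Dd_eq: "Dd = Bi ** A" using Adw_append[OF M2, of y "[lb']" "[la]"] by (simp add: Dd_def Bi_def A_def)
  have R: "mpow X n ** A = B ** mpow X n"
  proof -
    have "Ad (rho_word M y (Wd k n) ** rho_letter M y la) = Ad (rho_letter M y lb ** rho_word M y (Wd k n))"
      using riley_rho[OF M2 r] by simp
    then have "Ad (rho_word M y (Wd k n)) ** Ad (rho_letter M y la) = Ad (rho_letter M y lb) ** Ad (rho_word M y (Wd k n))"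
      using M2 by (simp add: Ad_mult rho_word_det rho_letter_det)
    then show ?thesis
      using Adw_wpow[OF M2, of y "w_word k" n]
      by (simp add: X_def A_def B_def Adw_def Wd_def rho_word_single)
  qed
  obtain n' where n': "n = Suc n'" using n1 by (cases n) auto
  have BX: "B ** mpow X (n - 1) = mpow X n ** A ** Xi"
  proof -
    have "B ** mpow X n' = B ** mpow X n' ** (X ** Xi)" using XXi by simp
    also have "\<dots> = B ** mpow X n ** Xi" unfolding n' mpow_Suc' by (simp only: matrix_mul_assoc)
    also have "\<dots> = mpow X n ** A ** Xi" using R by (simp add: matrix_mul_assoc)
    finally show ?thesis by (simp add: n')
  qed
  have E: "mpow X n - B ** mpow X (n - 1) ** F1 = mpow X n ** (mat 1 - A ** Xi ** F1)"
  proof -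
    have "B ** mpow X (n - 1) ** F1 = mpow X n ** A ** Xi ** F1" by (simp only: BX)
    then show ?thesis by (simp add: matrix_diff_ldistrib matrix_mul_assoc)
  qed
  define Dmi where "Dmi = ?Ad (inv_word (wpow ld m))"
  define Cmi where "Cmi = ?Ad (inv_word (wpow lc m))"
  have Xi_eq: "Xi = Dmi ** Ai ** Bi ** Cmi"
  proof -
    have e: "inv_word (w_word k) = inv_word (wpow ld m) @ ([la'] @ ([lb'] @ inv_word (wpow lc m)))"
      by (simp add: wk inv_word_append invs[symmetric] inv_word_Cons)
    show ?thesis
      unfolding Xi_def e Adw_append[OF M2] Dmi_def Ai_def Bi_def Cmi_def by (simp only: matrix_mul_assoc)
  qed
  have CC: "Cmi ** mpow (?Ad lc) m = mat 1"
    using Adw_inv(1)[OF M2, of y "wpow lc m"] by (simp add: Cmi_def Adw_wpow[OF M2])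
  have DD: "mpow Dd m ** Dmi = mat 1"
    using Adw_inv(2)[OF M2, of y "wpow ld m"] by (simp add: Dmi_def Dd_def Adw_wpow[OF M2])
  have XiF: "Xi ** F1 = Dmi ** (Ai + SD ** Bi)"
  proof -
    have "Xi ** F1 = Dmi ** Ai ** Bi ** (Cmi ** mpow (?Ad lc) m) ** (B + B ** A ** SD ** Bi)"
      by (simp add: Xi_eq F1_def matrix_mul_assoc)
    also have "\<dots> = Dmi ** Ai ** (Bi ** B) ** (mat 1 + A ** SD ** Bi)"
      by (simp add: CC matrix_add_ldistrib matrix_mul_assoc)
    also have "\<dots> = Dmi ** (Ai ** A) ** SD ** Bi + Dmi ** Ai"
      by (simp add: BBi matrix_add_ldistrib matrix_mul_assoc add.commute)
    also have "\<dots> = Dmi ** (Ai + SD ** Bi)"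
      by (simp add: AAi matrix_add_ldistrib matrix_mul_assoc add.commute)
    finally show ?thesis .
  qed
  have key: "(mpow Dd m ** Ai) ** (mat 1 - A ** Xi ** F1) = - (SD ** Ai)"
  proof -
    have "(mpow Dd m ** Ai) ** (mat 1 - A ** Xi ** F1) = mpow Dd m ** Ai - mpow Dd m ** (Ai ** A) ** (Xi ** F1)"
      by (simp add: matrix_diff_ldistrib matrix_mul_assoc)
    also have "\<dots> = mpow Dd m ** Ai - (mpow Dd m ** Dmi) ** (Ai + SD ** Bi)"
      by (simp only: AAi matrix_mul_rid XiF matrix_mul_assoc)
    also have "\<dots> = mpow Dd m ** Ai - (Ai + SD ** Bi)"
      by (simp only: DD matrix_mul_lid)
    also have "\<dots> = - (SD ** Ai)"
    proof -
      have T0: "mpow Dd m ** Ai = Ai + (SD ** (Dd - mat 1)) ** Ai"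
        by (simp add: SD_def telescope matrix_diff_rdistrib)
      have T1: "(SD ** (Dd - mat 1)) ** Ai = SD ** Bi - SD ** Ai"
        by (simp add: Dd_eq matrix_diff_ldistrib matrix_diff_rdistrib matrix_mul_assoc[symmetric] AAi)
      show ?thesis unfolding T0 T1 by (simp add: algebra_simps)
    qed
    finally show ?thesis .
  qed
  have "det (mpow Dd m ** Ai) = 1"
    using M2 by (simp add: det_mul det_mpow Dd_def Ai_def Adw_det)
  then have "det (mat 1 - A ** Xi ** F1) = - det SD"
    using key by (metis det_mul det_neg3 mult_1 det_mul[of SD Ai] Adw_det[OF M2] Ai_def mult_1_right)
  moreover have "det (mpow X n) = 1" using M2 by (simp add: det_mpow X_def Adw_det)
  ultimately have "det (mpow X n - B ** mpow X (n - 1) ** F1) = - det SD"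
    unfolding E by (simp add: det_mul)
  then show ?thesis unfolding X_def B_def F1_def A_def SD_def Dd_def Bi_def .
qed


lemma expsum_lbla: "expsum [lb, la] = 2" by (simp add: expsum_Cons lb_def la_def)

lemma odd_structure:
  assumes M2: "M * M = 1" and r: "rho_word M y (relator k n) = mat 1" and od: "odd k" and t: "t \<noteq> 0"
  defines "m \<equiv> k div 2"
    and "C \<equiv> Adw M y lc" and "Dd \<equiv> Adw M y ld" and "A \<equiv> Adw M y [la]"
    and "B \<equiv> Adw M y [lb]" and "Bi \<equiv> Adw M y [lb']"
    and "X \<equiv> Adw M y (w_word k)"
  shows "Phi M y t (fox GA (relator k n))
     = (mat 1 - smult3 t B) ** (\<Sum>j<n. smult3 (t ^ (2 * j)) (mpow X j)) **
       (- ((\<Sum>j<m. mpow C j) ** C) + smult3 t (mpow C m ** (B + B ** A ** (\<Sum>j<m. mpow Dd j) ** Bi)))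
       + smult3 (t ^ (2 * n)) (mpow X n)"
proof -
  have wk: "w_word k = wpow lc m @ [lb, la] @ wpow ld m" using od by (simp add: w_odd m_def)
  have ew: "expsum (w_word k) = 2"
    by (simp add: wk expsum_append expsum_wpow expsum_Cons lb_def la_def la'_def lb'_def)
  have PX: "Phi1 M y t (w_word k) = smult3 (t^2) X" by (simp add: Phi1_exp2[OF ew] X_def Adw_def)
  have PC: "Phi1 M y t lc = C" by (simp add: Phi1_exp0[OF expsum_lc] C_def Adw_def)
  have PD: "Phi1 M y t ld = Dd" by (simp add: Phi1_exp0[OF expsum_ld] Dd_def Adw_def)
  have Pb: "Phi1 M y t [lb] = smult3 t B" by (simp add: Phi1_exp1[OF expsum_lb] B_def Adw_def)
  have Pb': "Phi1 M y t [lb'] = smult3 (inverse t) Bi" by (simp add: Phi1_expm1[OF expsum_lb'] Bi_def Adw_def)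
  have Pba: "Phi1 M y t [lb, la] = smult3 (t^2) (B ** A)"
    using Adw_append[OF M2, of y "[lb]" "[la]"]
    by (simp add: Phi1_exp2[OF expsum_lbla] B_def A_def Adw_def)
  have foxba: "Phi M y t (fox GA [lb, la]) = smult3 t B"
    using Pb by (simp add: la_def lb_def Phi_single)
  have Pcm: "Phi1 M y t (wpow lc m) = mpow C m" by (simp add: Phi1_wpow[OF M2 t] PC)
  have tt: "t^2 * inverse t = t" "inverse t * t^2 = t" using t by (simp_all add: power2_eq_square)
  have Fw: "Phi M y t (fox GA (w_word k))
      = - ((\<Sum>j<m. mpow C j) ** C) + smult3 t (mpow C m ** (B + B ** A ** (\<Sum>j<m. mpow Dd j) ** Bi))"
  proof -
    have "Phi M y t (fox GA (w_word k)) = Phi M y t (fox GA (wpow lc m)) + Phi1 M y t (wpow lc m) **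
        (Phi M y t (fox GA [lb, la]) + Phi1 M y t [lb, la] ** Phi M y t (fox GA (wpow ld m)))"
      unfolding wk by (simp only: Phi_fox_append[OF M2 t])
    also have "\<dots> = - ((\<Sum>j<m. mpow C j) ** C) + mpow C m **
        (smult3 t B + smult3 (t^2) (B ** A) ** ((\<Sum>j<m. mpow Dd j) ** smult3 (inverse t) Bi))"
      by (simp only: Phi_fox_wpow[OF M2 t] Phi1_wpow[OF M2 t] fox_lc fox_ld PC PD Pb' Pcm foxba Pba
          matrix_neg_right)
    also have "smult3 t B + smult3 (t^2) (B ** A) ** ((\<Sum>j<m. mpow Dd j) ** smult3 (inverse t) Bi)
        = smult3 t (B + B ** A ** (\<Sum>j<m. mpow Dd j) ** Bi)"
      by (simp add: smult3_mult_left smult3_mult_right smult3_smult3 tt smult3_add_right matrix_mul_assoc)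
    finally show ?thesis by (simp add: smult3_mult_right)
  qed
  have mp: "mpow (Phi1 M y t (w_word k)) j = smult3 (t ^ (2 * j)) (mpow X j)" for j
    by (simp add: PX mpow_smult3 power_mult)
  show ?thesis
    unfolding P_structure[OF M2 t r] Wd_def Phi_fox_wpow[OF M2 t] Phi1_wpow[OF M2 t] mp Pb Fw
    by (simp add: matrix_mul_assoc)
qed

lemma sum0_first:
  assumes "n \<ge> 1"
  shows "(\<Sum>j<n. smult3 ((0::complex) ^ (2 * j)) (mpow X j)) = mat 1"
  using assms
proof (induction n rule: dec_induct)
  case base then show ?case by simp
next
  case (step n) then show ?case by (simp add: power_0_left)
qed

lemma sum0_last:
  "(\<Sum>j<Suc n'. smult3 ((0::complex) ^ (2 * (Suc n' - 1 - j))) (mpow X j)) = mpow X n'"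
proof -
  have "(\<Sum>j<n'. smult3 ((0::complex) ^ (2 * (Suc n' - 1 - j))) (mpow X j)) = 0"
    by (rule sum.neutral) (auto simp: power_0_left)
  then show ?thesis by simp
qed

lemma smult3_sandwich3: "smult3 (a * b * c) (A ** S ** Z) = smult3 a A ** smult3 b S ** smult3 c Z"
  by (simp add: smult3_mult_left smult3_mult_right smult3_smult3 matrix_mul_assoc mult_ac)

lemma odd_case:
  assumes M2: "M * M = 1" and r: "rho_word M y (relator k n) = mat 1" and od: "odd k"
    and k3: "k \<ge> 3" and n1: "n \<ge> 1" and b: "y \<noteq> 2"
    and cnz: "chU (k div 2) y \<noteq> 0"
  shows "tap_shape (adj_tap k n M y) (adj_tap_den M y) (6 * n - 3)
      (of_nat (k div 2) * (cheb_S (k div 2 - 1) y)^2)"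
proof -
  define m where "m = k div 2"
  have m1: "m \<ge> 1" using od k3 unfolding m_def by presburger
  define C where "C = Adw M y lc"
  define Dd where "Dd = Adw M y ld"
  define A where "A = Adw M y [la]"
  define B where "B = Adw M y [lb]"
  define Bi where "Bi = Adw M y [lb']"
  define X where "X = Adw M y (w_word k)"
  define SD where "SD = (\<Sum>j<m. mpow Dd j)"
  define F1 where "F1 = mpow C m ** (B + B ** A ** SD ** Bi)"
  define F0 where "F0 = - ((\<Sum>j<m. mpow C j) ** C)"
  define N where "N t = det (Phi M y t (fox GA (relator k n)))" for t
  define PP where "PP t = (mat 1 - smult3 t B) ** (\<Sum>j<n. smult3 (t ^ (2 * j)) (mpow X j)) **
       (F0 + smult3 t F1) + smult3 (t ^ (2 * n)) (mpow X n)" for t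
  define PR where "PR t = (smult3 t (mat 1) - B) ** (\<Sum>j<n. smult3 (t ^ (2 * (n - 1 - j))) (mpow X j)) **
       (smult3 t F0 + F1) + mpow X n" for t
  define c where "c = of_nat m * (chU m y)^2"
  have dC: "det C = 1" using M2 by (simp add: C_def Adw_det)
  have dSD: "det SD = of_nat m * (chU m y)^2"
    unfolding SD_def Dd_def Adw_def using det_geom_Ad[of "rho_word M y ld" m] trace_ld[OF M2]
    by (simp add: rho_word_det M2)
  have dSC: "det (\<Sum>j<m. mpow C j) = of_nat m * (chU m y)^2"
    unfolding C_def Adw_def using det_geom_Ad[of "rho_word M y lc" m] trace_lc[OF M2]
    by (simp add: rho_word_det M2)
  have pPP: "pmat PP" unfolding PP_def
    by (intro pmat_add pmat_mult pmat_diff pmat_smult pmat_const polyfun_id pmat_sum polyfun_power)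
  have pPR: "pmat PR" unfolding PR_def
    by (intro pmat_add pmat_mult pmat_diff pmat_smult pmat_const polyfun_id pmat_sum polyfun_power)
  have fN: "det (PP t) = t ^ 0 * N t" if t: "t \<noteq> 0" for t
    using odd_structure[OF M2 r od t]
    by (simp add: N_def PP_def m_def C_def Dd_def A_def B_def Bi_def X_def SD_def F1_def F0_def)
  have gf: "det (PR t) = t ^ (6 * n) * det (PP (1 / t))" if t: "t \<noteq> 0" for t
  proof -
    obtain n' where n': "n = Suc n'" using n1 by (cases n) auto
    have tn: "t ^ (2 * n) = t * t ^ (2 * n') * t" by (simp add: n' power_add mult_ac)
    have S: "smult3 (t ^ (2 * n')) (\<Sum>j<n. smult3 ((1 / t) ^ (2 * j)) (mpow X j))
        = (\<Sum>j<n. smult3 (t ^ (2 * (n - 1 - j))) (mpow X j))"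
    proof -
      have "smult3 (t ^ (2 * n')) (\<Sum>j<n. smult3 ((1 / t) ^ (2 * j)) (mpow X j))
          = (\<Sum>j<n. smult3 (t ^ (2 * n') * (1 / t) ^ (2 * j)) (mpow X j))"
        by (simp add: matrix_sum_smult smult3_smult3)
      also have "\<dots> = (\<Sum>j<n. smult3 (t ^ (2 * (n - 1 - j))) (mpow X j))"
      proof (rule sum.cong[OF refl])
        fix j assume "j \<in> {..<n}"
        then have j: "j \<le> n'" using n' by auto
        have ex: "2 * n' = 2 * (n' - j) + 2 * j" using j by simp
        have "t ^ (2 * n') = t ^ (2 * (n' - j)) * t ^ (2 * j)"
          by (subst ex) (simp only: power_add)
        then have "t ^ (2 * n') * (1 / t) ^ (2 * j) = t ^ (2 * (n' - j))"
          using t by (simp add: power_one_over field_simps)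
        then show "smult3 (t ^ (2 * n') * (1 / t) ^ (2 * j)) (mpow X j) = smult3 (t ^ (2 * (n - 1 - j))) (mpow X j)"
          by (simp add: n')
      qed
      finally show ?thesis .
    qed
    have "smult3 (t ^ (2 * n)) (PP (1 / t)) = PR t"
    proof -
      have "smult3 (t ^ (2 * n)) ((mat 1 - smult3 (1 / t) B) ** (\<Sum>j<n. smult3 ((1 / t) ^ (2 * j)) (mpow X j)) **
       (F0 + smult3 (1 / t) F1))
        = smult3 t (mat 1 - smult3 (1 / t) B) ** smult3 (t ^ (2 * n')) (\<Sum>j<n. smult3 ((1 / t) ^ (2 * j)) (mpow X j)) **
          smult3 t (F0 + smult3 (1 / t) F1)"
        unfolding tn by (rule smult3_sandwich3)
      also have "\<dots> = (smult3 t (mat 1) - B) ** (\<Sum>j<n. smult3 (t ^ (2 * (n - 1 - j))) (mpow X j)) **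
          (smult3 t F0 + F1)"
        unfolding S using t by (simp add: smult3_diff_right smult3_add_right smult3_smult3)
      finally show ?thesis
        unfolding PP_def PR_def using t by (simp add: smult3_add_right smult3_smult3 power_one_over
            power_mult_distrib[symmetric])
    qed
    then have "det (PR t) = (t ^ (2 * n))^3 * det (PP (1 / t))" by (metis det_smult3)
    then show ?thesis by (simp add: power_mult[symmetric] mult.commute)
  qed
  have f0: "det (PP 0) = - c"
  proof -
    have z2: "(0::complex) ^ (2 * n) = 0" using n1 by simp
    have "PP 0 = F0" unfolding PP_def sum0_first[OF n1] z2 by simp
    then show ?thesis by (simp add: det_neg3 F0_def det_mul dSC dC c_def)
  qed
  have g0: "det (PR 0) = - c"
  proof -
    obtain n' where n': "n = Suc n'" using n1 by (cases n) auto
    have "PR 0 = mpow X n - B ** mpow X (n - 1) ** F1"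
      unfolding PR_def using sum0_last[of n' X] by (simp add: n' matrix_neg_left)
    then have "det (PR 0) = - det SD"
      using odd_top[OF M2 r od n1]
      by (simp add: X_def B_def F1_def C_def A_def SD_def Dd_def Bi_def m_def)
    then show ?thesis by (simp add: dSD c_def)
  qed
  have cnz': "- c \<noteq> 0" using cnz m1 by (simp add: c_def m_def)
  obtain q where q: "degree q = 6 * n - 3" "lead_coeff q = - c" "coeff q 0 = - (- c)"
    "\<And>t. t \<noteq> 0 \<Longrightarrow> t ^ 0 * N t = (t - 1)^3 * poly q t"
    using finish[of "\<lambda>t. det (PP t)" "\<lambda>t. det (PR t)" 0 N "6 * n" "- c" "- c",
        OF polyfun_det[OF pPP] polyfun_det[OF pPR] fN gf f0 g0 cnz' cnz']
      divisibility[OF M2 r b] unfolding N_def by blast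
  have cc: "of_nat (k div 2) * (cheb_S (k div 2 - 1) y)^2 = c"
    using m1 by (simp add: c_def m_def[symmetric] cheb_S_chU)
  show ?thesis unfolding cc
  proof (rule tap_shape_intro[where p = "- q" and s' = "-1" and s = "1" and i = "0"])
    show "degree (- q) = 6 * n - 3" using q by simp
    show "lead_coeff (- q) = c" using q by simp
    show "coeff (- q) 0 = -1 * c" using q by simp
    show "(1::complex) \<in> {1, -1}" by simp
    show "(-1::complex) \<in> {1, -1}" by simp
    fix t :: complex assume t: "t \<noteq> 0" and dn: "adj_tap_den M y t \<noteq> 0"
    have t1: "(1 - t)^3 \<noteq> 0" using dn by (simp add: den_formula[OF M2])
    have den: "det (Phi M y t [(1, []), (-1, [lb])]) = (1 - t)^3"
      using den_formula[OF M2, of y t] by (simp add: adj_tap_den_def)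
    have "adj_tap k n M y t = N t / (1 - t)^3"
      by (simp add: adj_tap_def N_def den)
    also have "\<dots> = - poly q t"
    proof -
      have "N t = (t - 1)^3 * poly q t" using q(4)[OF t] by simp
      moreover have "(t - 1)^3 = - ((1 - t)^3)" by (simp add: power3_eq_cube algebra_simps)
      ultimately show ?thesis using t1 by (simp add: field_simps)
    qed
    finally show "adj_tap k n M y t = 1 * t powi 0 * poly (- q) t" by simp
  qed
qed

section \<open>Non-vanishing\<close>

lemma chU_add: "chU (a + b + 1) v = chU (a + 1) v * chU (b + 1) v - chU a v * chU b v"
proof -
  have "chU (a + b + 1) v = chU (a + 1) v * chU (b + 1) v - chU a v * chU b v \<and>
        chU (Suc a + b + 1) v = chU (Suc a + 1) v * chU (b + 1) v - chU (Suc a) v * chU b v"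
  proof (induction a)
    case 0 then show ?case by simp
  next
    case (Suc a)
    have R1: "chU (Suc (Suc a) + b + 1) v = v * chU (Suc a + b + 1) v - chU (a + b + 1) v"
      by (simp add: numeral_2_eq_2)
    have R2: "chU (Suc (Suc a) + 1) v = v * chU (Suc a + 1) v - chU (Suc a) v"
      by simp
    have R3: "chU (Suc a + 1) v = chU (Suc (Suc a)) v" "chU (a + 1) v = chU (Suc a) v" by simp_all
    from Suc have I1: "chU (a + b + 1) v = chU (a + 1) v * chU (b + 1) v - chU a v * chU b v"
      and I2: "chU (Suc a + b + 1) v = chU (Suc a + 1) v * chU (b + 1) v - chU (Suc a) v * chU b v"
      by blast+
    have "chU (Suc (Suc a) + b + 1) v = chU (Suc (Suc a) + 1) v * chU (b + 1) v - chU (Suc (Suc a)) v * chU b v"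
      unfolding R1 R2 I1 I2 R3 by (simp add: algebra_simps)
    then show ?case using I2 by blast
  qed
  then show ?thesis by blast
qed

lemma scalar_pm:
  assumes "lam * lam = (1::complex)"
  shows "mk2 lam 0 0 lam = mat 1 \<or> mk2 lam 0 0 lam = - mat 1"
proof -
  have "lam = 1 \<or> lam = -1" using assms
    by (metis (no_types, lifting) mult_cancel_left1 square_eq_1_iff)
  then show ?thesis
    by (auto simp: mat1_mk2 vec_eq_iff forall_2)
qed

lemma scalar_mult: "mk2 lam 0 0 lam ** Z = Z ** mk2 lam 0 0 lam"
proof -
  obtain p q r s where "Z = mk2 p q r s" using mk2_eta by blast
  then show ?thesis by (simp add: mk2_mult mult.commute)
qed

lemma mpow_mk2_scalar: "mpow (mk2 lam 0 0 lam) j = mk2 (lam ^ j) 0 0 (lam ^ j)"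
  by (induction j) (simp_all add: mat1_mk2 mk2_mult)

lemma riley_scalar_False:
  assumes M2: "M * M = 1" and r: "rho_word M y (relator k n) = mat 1"
    and W: "rho_word M y (Wd k n) = mk2 lam 0 0 lam" and lam: "lam \<noteq> 0"
  shows False
proof -
  have "mk2 lam 0 0 lam ** rho_letter M y la = mk2 lam 0 0 lam ** rho_letter M y lb"
    using riley_rho[OF M2 r] W scalar_mult by metis
  then have "lam * 1 = lam * 0"
    using M2 by (simp add: la_def lb_def rho_letter_simps mk2_mult mk2_eq_iff)
  then show False using lam by simp
qed

lemma y_ne_2:
  assumes M2: "M * M = 1" and r: "rho_word M y (relator k n) = mat 1"
  shows "y \<noteq> 2"
proof
  assume y: "y = 2"
  have b: "rho_letter M y lb = mk2 M 0 0 M" using M2 y by (simp add: lb_def rho_letter_simps)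
  have "rho_word M y (Wd k n) ** rho_letter M y la = rho_word M y (Wd k n) ** mk2 M 0 0 M"
    using riley_rho[OF M2 r] b scalar_mult by metis
  then have "rho_word M y (inv_word (Wd k n)) ** (rho_word M y (Wd k n) ** rho_letter M y la)
     = rho_word M y (inv_word (Wd k n)) ** (rho_word M y (Wd k n) ** mk2 M 0 0 M)" by simp
  then have "rho_letter M y la = mk2 M 0 0 M"
    using rho_word_inv(1)[OF M2] by (simp add: matrix_mul_assoc)
  then show False using M2 by (simp add: la_def rho_letter_simps mk2_eq_iff)
qed

lemma even_nonvanishing:
  assumes M2: "M * M = 1" and r: "rho_word M y (relator k n) = mat 1" and ev: "even k"
    and k1: "k \<ge> 1" and n1: "n \<ge> 1"
  shows "chU (k div 2) y \<noteq> 0" "chU n (trace (rho_word M y (w_word k))) \<noteq> 0"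
proof -
  define m where "m = k div 2"
  have m1: "m \<ge> 1" using ev k1 unfolding m_def by presburger
  have wk: "w_word k = wpow lc m @ wpow ld m" using ev by (simp add: w_even m_def)
  show "chU (k div 2) y \<noteq> 0"
  proof
    assume U: "chU (k div 2) y = 0"
    obtain l1 where l1: "mpow (rho_word M y lc) m = mk2 l1 0 0 l1" "l1 * l1 = 1"
      using mpow_scalar[of "rho_word M y lc" m] U m1 trace_lc[OF M2] rho_word_det[OF M2]
      by (auto simp: m_def)
    obtain l2 where l2: "mpow (rho_word M y ld) m = mk2 l2 0 0 l2" "l2 * l2 = 1"
      using mpow_scalar[of "rho_word M y ld" m] U m1 trace_ld[OF M2] rho_word_det[OF M2]
      by (auto simp: m_def)
    have "rho_word M y (w_word k) = mk2 (l1 * l2) 0 0 (l1 * l2)"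
      by (simp add: wk rho_word_append rho_wpow l1 l2 mk2_mult)
    then have "rho_word M y (Wd k n) = mk2 ((l1 * l2) ^ n) 0 0 ((l1 * l2) ^ n)"
      by (simp add: Wd_def rho_wpow mpow_mk2_scalar)
    moreover have "(l1 * l2) ^ n \<noteq> 0" using l1 l2 by auto
    ultimately show False using riley_scalar_False[OF M2 r] by blast
  qed
  show "chU n (trace (rho_word M y (w_word k))) \<noteq> 0"
  proof
    assume U: "chU n (trace (rho_word M y (w_word k))) = 0"
    obtain l where l: "mpow (rho_word M y (w_word k)) n = mk2 l 0 0 l" "l * l = 1"
      using mpow_scalar[of "rho_word M y (w_word k)" n] U n1 rho_word_det[OF M2] by auto
    have "rho_word M y (Wd k n) = mk2 l 0 0 l" by (simp add: Wd_def rho_wpow l)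
    moreover have "l \<noteq> 0" using l by auto
    ultimately show False using riley_scalar_False[OF M2 r] by blast
  qed
qed

lemma torus_False:
  assumes M2: "M * M = 1" and r: "rho_word M y (relator k n) = mat 1" and n1: "n \<ge> 1"
    and faith: "\<And>u. rho_word M y u = mat 1 \<or> rho_word M y u = - mat 1 \<Longrightarrow> gtriv (relator k n) u"
    and ew: "expsum (w_word k) = 2"
    and eps: "rho_word M y (w_word k) = mk2 e 0 0 e ** rho_word M y [lb, la]" and e: "e * e = 1"
  shows False
proof -
  define beta where "beta = 2 - y"
  define u where "u = rho_word M y [lb, la]"
  have u: "u = mk2 1 M (beta * M) (beta + 1)"
    using M2 by (simp add: u_def beta_def rho_word_Cons la_def lb_def rho_letter_simps mk2_mult mat1_mk2 algebra_simps)
  define tau where "tau = beta + 2"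
  have du: "1 * (beta + 1) - M * (beta * M) = 1" using M2 by (simp add: algebra_simps)
  obtain n' where n': "n = Suc n'" using n1 by (cases n) auto
  have un: "mpow u n = mk2 (chU n tau * 1 - chU n' tau) (chU n tau * M) (chU n tau * (beta * M))
      (chU n tau * (beta + 1) - chU n' tau)"
    using power_formula[OF du, of n'] by (simp add: u n' tau_def add.commute)
  have W: "rho_word M y (Wd k n) = mk2 (e ^ n) 0 0 (e ^ n) ** mpow u n"
  proof -
    have "mpow (mk2 e 0 0 e ** u) j = mk2 (e ^ j) 0 0 (e ^ j) ** mpow u j" for j
    proof (induction j)
      case 0 then show ?case by (simp add: mat1_mk2 mk2_mult)
    next
      case (Suc j)
      have "mpow (mk2 e 0 0 e ** u) (Suc j) = mk2 e 0 0 e ** u ** (mk2 (e ^ j) 0 0 (e ^ j) ** mpow u j)"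
        using Suc by simp
      also have "\<dots> = mk2 e 0 0 e ** mk2 (e ^ j) 0 0 (e ^ j) ** (u ** mpow u j)"
        by (metis matrix_mul_assoc scalar_mult)
      finally show ?case by (simp add: mk2_mult)
    qed
    then show ?thesis by (simp add: Wd_def rho_wpow eps u_def)
  qed
  have en: "e ^ n \<noteq> 0" using e by auto
  have R: "mpow u n ** rho_letter M y la = rho_letter M y lb ** mpow u n"
  proof -
    have "mk2 (e ^ n) 0 0 (e ^ n) ** (mpow u n ** rho_letter M y la) = mk2 (e ^ n) 0 0 (e ^ n) ** (rho_letter M y lb ** mpow u n)"
      using riley_rho[OF M2 r] W scalar_mult by (metis matrix_mul_assoc)
    then have "mk2 (inverse (e ^ n)) 0 0 (inverse (e ^ n)) ** (mk2 (e ^ n) 0 0 (e ^ n) ** (mpow u n ** rho_letter M y la))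
      = mk2 (inverse (e ^ n)) 0 0 (inverse (e ^ n)) ** (mk2 (e ^ n) 0 0 (e ^ n) ** (rho_letter M y lb ** mpow u n))" by simp
    then show ?thesis using en by (simp add: matrix_mul_assoc mk2_mult mat1_mk2[symmetric])
  qed
  have eqU: "chU n tau = chU n' tau"
  proof -
    have "(mpow u n ** rho_letter M y la) $ 1 $ 2 = (rho_letter M y lb ** mpow u n) $ 1 $ 2" using R by simp
    then show ?thesis using M2 by (simp add: un la_def lb_def rho_letter_simps mk2_mult algebra_simps)
  qed
  have U0: "chU (2 * n - 1) tau = 0"
  proof -
    have "chU (n' + n' + 1) tau = chU (n' + 1) tau * chU (n' + 1) tau - chU n' tau * chU n' tau"
      by (rule chU_add)
    then show ?thesis using eqU by (simp add: n' mult_2)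
  qed
  have dU: "det u = 1" using du by (simp add: u det_mk2)
  have tU: "trace u = tau" by (simp add: u trace_def sum_2 tau_def)
  have h1: "2 * n - 1 \<ge> 1" using n1 by simp
  have h2: "chU (2 * n - 1) (trace u) = 0" using U0 tU by simp
  obtain l where l: "mpow u (2 * n - 1) = mk2 l 0 0 l" "l * l = 1"
    using mpow_scalar[OF dU h1 h2] by blast
  have "rho_word M y (wpow (w_word k) (2 * n - 1)) = mk2 (e ^ (2 * n - 1) * l) 0 0 (e ^ (2 * n - 1) * l)"
  proof -
    have "mpow (mk2 e 0 0 e ** u) j = mk2 (e ^ j) 0 0 (e ^ j) ** mpow u j" for j
    proof (induction j)
      case 0 then show ?case by (simp add: mat1_mk2 mk2_mult)
    next
      case (Suc j)
      have "mpow (mk2 e 0 0 e ** u) (Suc j) = mk2 e 0 0 e ** u ** (mk2 (e ^ j) 0 0 (e ^ j) ** mpow u j)"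
        using Suc by simp
      also have "\<dots> = mk2 e 0 0 e ** mk2 (e ^ j) 0 0 (e ^ j) ** (u ** mpow u j)"
        by (metis matrix_mul_assoc scalar_mult)
      finally show ?case by (simp add: mk2_mult)
    qed
    then have "rho_word M y (wpow (w_word k) (2 * n - 1)) = mk2 (e ^ (2 * n - 1)) 0 0 (e ^ (2 * n - 1)) ** mpow u (2 * n - 1)"
      by (simp only: rho_wpow eps u_def[symmetric])
    then show ?thesis by (simp only: l mk2_mult) simp
  qed
  moreover have "(e ^ (2 * n - 1) * l) * (e ^ (2 * n - 1) * l) = 1"
    using e l by (simp add: mult_ac power_mult_distrib[symmetric])
  ultimately have "rho_word M y (wpow (w_word k) (2 * n - 1)) = mat 1 \<or> rho_word M y (wpow (w_word k) (2 * n - 1)) = - mat 1"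
    using scalar_pm by metis
  then have "gtriv (relator k n) (wpow (w_word k) (2 * n - 1))" by (rule faith)
  then have "expsum (wpow (w_word k) (2 * n - 1)) = 0" using gtriv_expsum expsum_relator by blast
  then show False using ew n1 by (simp add: expsum_wpow)
qed


lemma odd_expsum: "odd k \<Longrightarrow> expsum (w_word k) = 2"
  by (simp add: w_odd expsum_append expsum_wpow expsum_Cons lb_def la_def la'_def lb'_def)

lemma odd_nonvanishing:
  assumes M2: "M * M = 1" and r: "rho_word M y (relator k n) = mat 1" and od: "odd k"
    and k3: "k \<ge> 3" and n1: "n \<ge> 1"
    and faith: "\<And>u. rho_word M y u = mat 1 \<or> rho_word M y u = - mat 1 \<Longrightarrow> gtriv (relator k n) u"
  shows "chU (k div 2) y \<noteq> 0"
proof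
  assume U: "chU (k div 2) y = 0"
  define m where "m = k div 2"
  have m1: "m \<ge> 1" using od k3 unfolding m_def by presburger
  have wk: "w_word k = wpow lc m @ [lb, la] @ wpow ld m" using od by (simp add: w_odd m_def)
  obtain l1 where l1: "mpow (rho_word M y lc) m = mk2 l1 0 0 l1" "l1 * l1 = 1"
    using mpow_scalar[of "rho_word M y lc" m] U m1 trace_lc[OF M2] rho_word_det[OF M2]
    by (auto simp: m_def)
  obtain l2 where l2: "mpow (rho_word M y ld) m = mk2 l2 0 0 l2" "l2 * l2 = 1"
    using mpow_scalar[of "rho_word M y ld" m] U m1 trace_ld[OF M2] rho_word_det[OF M2]
    by (auto simp: m_def)
  have "rho_word M y (w_word k) = mk2 l1 0 0 l1 ** rho_word M y [lb, la] ** mk2 l2 0 0 l2"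
    by (simp only: wk rho_word_append rho_wpow l1 l2 matrix_mul_assoc)
  also have "\<dots> = mk2 l1 0 0 l1 ** (mk2 l2 0 0 l2 ** rho_word M y [lb, la])"
    by (simp only: matrix_mul_assoc[symmetric] scalar_mult[of l2 "rho_word M y [lb, la]", symmetric])
  also have "\<dots> = mk2 (l1 * l2) 0 0 (l1 * l2) ** rho_word M y [lb, la]"
    by (simp only: matrix_mul_assoc mk2_mult) simp
  finally have eps: "rho_word M y (w_word k) = mk2 (l1 * l2) 0 0 (l1 * l2) ** rho_word M y [lb, la]" .
  have e: "(l1 * l2) * (l1 * l2) = 1" using l1 l2 by (simp add: mult_ac)
  show False using torus_False[OF M2 r n1 faith odd_expsum[OF od] eps e] by blast
qed

lemma k1_False:
  assumes M2: "M * M = 1" and r: "rho_word M y (relator 1 n) = mat 1" and n1: "n \<ge> 1"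
    and faith: "\<And>u. rho_word M y u = mat 1 \<or> rho_word M y u = - mat 1 \<Longrightarrow> gtriv (relator 1 n) u"
  shows False
proof -
  have w1: "w_word 1 = [lb, la]" by (simp add: w_word_def)
  have eps: "rho_word M y (w_word 1) = mk2 1 0 0 1 ** rho_word M y [lb, la]"
    by (simp only: w1 mat1_mk2[symmetric] matrix_mul_lid)
  show False using torus_False[OF M2 r n1 faith odd_expsum eps] by simp
qed

theorem proposition3p7:
  fixes k n :: nat and M y :: complex
  assumes "k \<ge> 1" and "n \<ge> 1"
    and "M = 1 \<or> M = -1"
    and "discrete_faithful (relator k n) M y"
  defines "z \<equiv> trace (rho_word M y (w_word k))"
    and "m \<equiv> k div 2"
  shows "(even k \<longrightarrow> tap_shape (adj_tap k n M y) (adj_tap_den M y) 3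
            (of_nat (m * n) * (cheb_S (m - 1) y)\<^sup>2 * (cheb_S (n - 1) z)\<^sup>2))
       \<and> (odd k \<and> k \<ge> 3 \<longrightarrow> tap_shape (adj_tap k n M y) (adj_tap_den M y) (6 * n - 3)
            (of_nat m * (cheb_S (m - 1) y)\<^sup>2))
       \<and> (k = 1 \<and> n \<ge> 2 \<longrightarrow> tap_shape (adj_tap k n M y) (adj_tap_den M y) (6 * n - 9) 1)"
proof -
  have M2: "M * M = 1" using assms(3) by auto
  have r: "rho_word M y (relator k n) = mat 1"
    using assms(4) by (simp add: discrete_faithful_def)
  have faith: "\<And>u. rho_word M y u = mat 1 \<or> rho_word M y u = - mat 1 \<Longrightarrow> gtriv (relator k n) u"
    using assms(4) unfolding discrete_faithful_def by blast
  have b: "y \<noteq> 2" by (rule y_ne_2[OF M2 r])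
  show ?thesis
  proof (intro conjI impI)
    assume ev: "even k"
    show "tap_shape (adj_tap k n M y) (adj_tap_den M y) 3
            (of_nat (m * n) * (cheb_S (m - 1) y)\<^sup>2 * (cheb_S (n - 1) z)\<^sup>2)"
      unfolding z_def m_def
      using even_case[OF M2 r ev assms(1) assms(2) b] even_nonvanishing[OF M2 r ev assms(1) assms(2)]
      by blast
  next
    assume od: "odd k \<and> k \<ge> 3"
    show "tap_shape (adj_tap k n M y) (adj_tap_den M y) (6 * n - 3) (of_nat m * (cheb_S (m - 1) y)\<^sup>2)"
      unfolding m_def
      using odd_case[OF M2 r conjunct1[OF od] conjunct2[OF od] assms(2) b]
        odd_nonvanishing[OF M2 r conjunct1[OF od] conjunct2[OF od] assms(2) faith]
      by blast
  next
    assume k1: "k = 1 \<and> n \<ge> 2"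
    then have False using k1_False[OF M2 _ assms(2), of y] r faith by auto
    then show "tap_shape (adj_tap k n M y) (adj_tap_den M y) (6 * n - 9) 1" ..
  qed
qed


end
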